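(* Fix $\theta$ and $g\in\{r,c\}$, assume $c_\gamma\ge1$ and an integer $T_{\max}\ge2$. Let $s^0$ be an arbitrary (possibly random) initial state, generate $a^t\sim\pi_\theta(\cdot|s^t)$, $s^{t+1}\sim P(\cdot|s^t,a^t)$, set $z^t=(s^t,a^t,s^{t+1})$, let $Q\sim\mathrm{Geom}(1/2)$ independent of the trajectory, and define for $X\in\{\mathbf{A}_g(\theta;\cdot),\mathbf{b}_g(\cdot)\}$ $$X^j=2^{-j}\sum_{t=0}^{2^j-1}X(z^t),\qquad X^{\mathrm{MLMC}}=X^0+2^Q(X^Q-X^{Q-1})\mathbf{1}\{2^Q\le T_{\max}\}.$$ Then, for a universal constant $C$ (expectations over $Q$ and the trajectory, conditional on $s^0$): (a) $\|\mathbb{E}[\mathbf{A}^{\mathrm{MLMC}}]-\mathbf{A}_g(\theta)\|^2\le Cc_\gamma^2\tau_{\mathrm{mix}}T_{\max}^{-1}$; (b) $\|\mathbb{E}[\mathbf{b}^{\mathrm{MLMC}}]-\mathbf{b}_g(\theta)\|^2\le Cc_\gamma^2\tau_{\mathrm{mix}}T_{\max}^{-1}$; (c) $\mathbb{E}\|\mathbf{A}^{\mathrm{MLMC}}-\mathbf{A}_g(\theta)\|^2\le Cc_\gamma^2\tau_{\mathrm{mix}}\log T_{\max}$; (d) $\mathbb{E}\|\mathbf{b}^{\mathrm{MLMC}}-\mathbf{b}_g(\theta)\|^2\le Cc_\gamma^2\tau_{\mathrm{mix}}\log T_{\max}$.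
   Context: Ergodic CMDP with finite $\mathcal{S},\mathcal{A}$, $r\in[0,1]$, $c\in[-1,1]$; every policy induces an irreducible aperiodic state chain $P^{\pi}(s,s')=\sum_a\pi(a|s)P(s'|s,a)$ with stationary distribution $d^\pi$; $\nu^\pi(s,a)=d^\pi(s)\pi(a|s)$. Mixing time: $\tau_{\mathrm{mix}}^\theta=\min\{t\ge1:\|(P^{\pi_\theta})^t(s,\cdot)-d^{\pi_\theta}\|_{\mathrm{TV}}\le1/4\ \forall s\}$ and $\tau_{\mathrm{mix}}=\sup_\theta\tau_{\mathrm{mix}}^\theta<\infty$. Feature map $\phi_g:\mathcal{S}\to\mathbb{R}^m$ with $\|\phi_g(s)\|\le1$. For $z=(s,a,s')$: $\mathbf{A}_g(\theta;z)=\begin{pmatrix}c_\gamma&0\\ \phi_g(s)&\phi_g(s)(\phi_g(s)-\phi_g(s'))^\top\end{pmatrix}$, $\mathbf{b}_g(z)=\begin{pmatrix}c_\gamma g(s,a)\\ g(s,a)\phi_g(s)\end{pmatrix}$; $\mathbf{A}_g(\theta)=\mathbb{E}_\theta[\mathbf{A}_g(\theta;z)]$, $\mathbf{b}_g(\theta)=\mathbb{E}_\theta[\mathbf{b}_g(z)]$, with $\mathbb{E}_\theta$ over $(s,a)\sim\nu^{\pi_\theta}$, $s'\sim P(\cdot|s,a)$. Matrix norms are operator norms. *)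

theory Defs
  imports Complex_Main
begin

text \<open>Finite state set S and action set Act are carriers of natural numbers,
so that the universal constant C can be quantified before every problem
dimension.
Vectors in R^(m+1) are functions nat => real on indices {..m};
(m+1)x(m+1) matrices are functions nat => nat => real on {..m} x {..m}.
Index 0 is the first (scalar) block, index i+1 is feature coordinate i.\<close>

type_synonym trans = "nat \<times> nat \<times> nat"

definition is_kernel :: "nat set \<Rightarrow> nat set \<Rightarrow> (nat \<Rightarrow> nat \<Rightarrow> nat \<Rightarrow> real) \<Rightarrow> bool" where
  "is_kernel S Act P \<longleftrightarrow> (\<forall>s\<in>S. \<forall>a\<in>Act. (\<forall>s'\<in>S. P s a s' \<ge> 0) \<and> (\<Sum>s'\<in>S. P s a s') = 1)"

definition is_policy :: "nat set \<Rightarrow> nat set \<Rightarrow> (nat \<Rightarrow> nat \<Rightarrow> real) \<Rightarrow> bool" where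
  "is_policy S Act \<pi> \<longleftrightarrow> (\<forall>s\<in>S. (\<forall>a\<in>Act. \<pi> s a \<ge> 0) \<and> (\<Sum>a\<in>Act. \<pi> s a) = 1)"

definition Ppi :: "nat set \<Rightarrow> (nat \<Rightarrow> nat \<Rightarrow> nat \<Rightarrow> real) \<Rightarrow> (nat \<Rightarrow> nat \<Rightarrow> real) \<Rightarrow> nat \<Rightarrow> nat \<Rightarrow> real" where
  "Ppi Act P \<pi> s s' = (\<Sum>a\<in>Act. \<pi> s a * P s a s')"

fun mpow :: "nat set \<Rightarrow> (nat \<Rightarrow> nat \<Rightarrow> real) \<Rightarrow> nat \<Rightarrow> nat \<Rightarrow> nat \<Rightarrow> real" where
  "mpow S K 0 s s' = (if s = s' then 1 else 0)"
| "mpow S K (Suc n) s s' = (\<Sum>u\<in>S. mpow S K n s u * K u s')"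

definition irreducible :: "nat set \<Rightarrow> (nat \<Rightarrow> nat \<Rightarrow> real) \<Rightarrow> bool" where
  "irreducible S K \<longleftrightarrow> (\<forall>s\<in>S. \<forall>s'\<in>S. \<exists>n>0. mpow S K n s s' > 0)"

definition aperiodic :: "nat set \<Rightarrow> (nat \<Rightarrow> nat \<Rightarrow> real) \<Rightarrow> bool" where
  "aperiodic S K \<longleftrightarrow> (\<forall>s\<in>S. Gcd {n. n > 0 \<and> mpow S K n s s > 0} = 1)"

definition stationary :: "nat set \<Rightarrow> (nat \<Rightarrow> nat \<Rightarrow> real) \<Rightarrow> (nat \<Rightarrow> real) \<Rightarrow> bool" where
  "stationary S K d \<longleftrightarrow> (\<forall>s\<in>S. d s \<ge> 0) \<and> (\<forall>s. s \<notin> S \<longrightarrow> d s = 0) \<and>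
     (\<Sum>s\<in>S. d s) = 1 \<and> (\<forall>s'\<in>S. d s' = (\<Sum>s\<in>S. d s * K s s'))"

text \<open>The (unique, under irreducibility) stationary distribution.\<close>
definition stat_dist :: "nat set \<Rightarrow> (nat \<Rightarrow> nat \<Rightarrow> real) \<Rightarrow> nat \<Rightarrow> real" where
  "stat_dist S K = (THE d. stationary S K d)"

text \<open>Total variation distance (sup over events = half the L1 distance).\<close>
definition tv :: "nat set \<Rightarrow> (nat \<Rightarrow> real) \<Rightarrow> (nat \<Rightarrow> real) \<Rightarrow> real" where
  "tv S \<mu> \<nu> = (\<Sum>s\<in>S. \<bar>\<mu> s - \<nu> s\<bar>) / 2"

definition mix_time :: "nat set \<Rightarrow> (nat \<Rightarrow> nat \<Rightarrow> real) \<Rightarrow> nat" where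
  "mix_time S K = (LEAST t. t \<ge> 1 \<and> (\<forall>s\<in>S. tv S (mpow S K t s) (stat_dist S K) \<le> 1/4))"

definition vnorm :: "nat \<Rightarrow> (nat \<Rightarrow> real) \<Rightarrow> real" where
  "vnorm n x = sqrt (\<Sum>i<n. (x i)\<^sup>2)"

definition opnorm :: "nat \<Rightarrow> (nat \<Rightarrow> nat \<Rightarrow> real) \<Rightarrow> real" where
  "opnorm n M = Sup {vnorm n (\<lambda>i. \<Sum>j<n. M i j * x j) | x. vnorm n x \<le> 1}"

text \<open>A_g(theta; z) and b_g(z) in R^(m+1); phi s i is coordinate i < m of phi_g(s).\<close>
definition Amat :: "real \<Rightarrow> (nat \<Rightarrow> nat \<Rightarrow> real) \<Rightarrow> trans \<Rightarrow> nat \<Rightarrow> nat \<Rightarrow> real" where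
  "Amat c\<gamma> \<phi> z i j = (case z of (s, a, s') \<Rightarrow>
     (if i = 0 then (if j = 0 then c\<gamma> else 0)
      else (if j = 0 then \<phi> s (i - 1) else \<phi> s (i - 1) * (\<phi> s (j - 1) - \<phi> s' (j - 1)))))"

definition bvec :: "real \<Rightarrow> (nat \<Rightarrow> nat \<Rightarrow> real) \<Rightarrow> (nat \<Rightarrow> nat \<Rightarrow> real) \<Rightarrow> trans \<Rightarrow> nat \<Rightarrow> real" where
  "bvec c\<gamma> \<phi> g z i = (case z of (s, a, s') \<Rightarrow>
     (if i = 0 then c\<gamma> * g s a else g s a * \<phi> s (i - 1)))"

definition statE :: "nat set \<Rightarrow> nat set \<Rightarrow> (nat \<Rightarrow> nat \<Rightarrow> nat \<Rightarrow> real) \<Rightarrow> (nat \<Rightarrow> nat \<Rightarrow> real)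
    \<Rightarrow> (trans \<Rightarrow> real) \<Rightarrow> real" where
  "statE S Act P \<pi> F = (let d = stat_dist S (Ppi Act P \<pi>) in
     (\<Sum>s\<in>S. \<Sum>a\<in>Act. \<Sum>s'\<in>S. d s * \<pi> s a * P s a s' * F (s, a, s')))"

text \<open>Expectation of F(z^0,...,z^(n-1)) along the trajectory started at s
  (a^t ~ pi(.|s^t), s^(t+1) ~ P(.|s^t,a^t)).\<close>
fun traj_exp :: "nat set \<Rightarrow> nat set \<Rightarrow> (nat \<Rightarrow> nat \<Rightarrow> nat \<Rightarrow> real) \<Rightarrow> (nat \<Rightarrow> nat \<Rightarrow> real)
    \<Rightarrow> nat \<Rightarrow> nat \<Rightarrow> (trans list \<Rightarrow> real) \<Rightarrow> real" where
  "traj_exp S Act P \<pi> 0 s F = F []"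
| "traj_exp S Act P \<pi> (Suc n) s F =
     (\<Sum>a\<in>Act. \<Sum>s'\<in>S. \<pi> s a * P s a s' * traj_exp S Act P \<pi> n s' (\<lambda>zs. F ((s, a, s') # zs)))"

definition lvl :: "(trans \<Rightarrow> real) \<Rightarrow> trans list \<Rightarrow> nat \<Rightarrow> real" where
  "lvl X zs j = (\<Sum>t<2^j. X (zs ! t)) / 2^j"

definition mlmc :: "(trans \<Rightarrow> real) \<Rightarrow> nat \<Rightarrow> nat \<Rightarrow> trans list \<Rightarrow> real" where
  "mlmc X Tmax q zs = lvl X zs 0 +
     (if 2^q \<le> Tmax then 2^q * (lvl X zs q - lvl X zs (q - 1)) else 0)"

text \<open>Joint expectation over Q ~ Geom(1/2) on {1,2,...} (P(Q=q) = 2^(-q)),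
  independent of the trajectory from s0, of a quantity F q zs which depends only
  on the first 2^q transitions.\<close>
definition mlmc_exp :: "nat set \<Rightarrow> nat set \<Rightarrow> (nat \<Rightarrow> nat \<Rightarrow> nat \<Rightarrow> real) \<Rightarrow> (nat \<Rightarrow> nat \<Rightarrow> real)
    \<Rightarrow> nat \<Rightarrow> (nat \<Rightarrow> trans list \<Rightarrow> real) \<Rightarrow> real" where
  "mlmc_exp S Act P \<pi> s0 F = (\<Sum>k. (1/2)^(Suc k) * traj_exp S Act P \<pi> (2^(Suc k)) s0 (F (Suc k)))"

end

theory Submission
  imports Defs
begin
definition l1 :: "nat set \<Rightarrow> (nat \<Rightarrow> real) \<Rightarrow> real" where
  "l1 S v = (\<Sum>y\<in>S. \<bar>v y\<bar>)"

definition vm :: "nat set \<Rightarrow> (nat \<Rightarrow> real) \<Rightarrow> (nat \<Rightarrow> nat \<Rightarrow> real) \<Rightarrow> nat \<Rightarrow> real" where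
  "vm S v M y = (\<Sum>x\<in>S. v x * M x y)"

lemma contract_gen:
  assumes fin: "finite S" and zs: "\<And>y. (\<Sum>x\<in>S. v x) * D y = 0"
    and rows: "\<And>x. x \<in> S \<Longrightarrow> (\<Sum>y\<in>S. \<bar>M x y - D y\<bar>) \<le> c"
  shows "l1 S (vm S v M) \<le> c * l1 S v"
proof -
  have eq: "vm S v M y = (\<Sum>x\<in>S. v x * (M x y - D y))" for y
  proof -
    have "(\<Sum>x\<in>S. v x * (M x y - D y)) = vm S v M y - (\<Sum>x\<in>S. v x) * D y"
      by (simp add: vm_def algebra_simps sum_subtractf sum_distrib_right sum_distrib_left)
    then show ?thesis using zs[of y] by simp
  qed
  have "l1 S (vm S v M) \<le> (\<Sum>y\<in>S. \<Sum>x\<in>S. \<bar>v x\<bar> * \<bar>M x y - D y\<bar>)"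
    unfolding l1_def eq
    by (rule sum_mono) (metis (no_types, lifting) abs_mult sum.cong sum_abs)
  also have "\<dots> = (\<Sum>x\<in>S. \<bar>v x\<bar> * (\<Sum>y\<in>S. \<bar>M x y - D y\<bar>))"
    by (subst sum.swap) (simp add: sum_distrib_left)
  also have "\<dots> \<le> (\<Sum>x\<in>S. \<bar>v x\<bar> * c)"
    by (rule sum_mono) (simp add: mult_left_mono rows)
  also have "\<dots> = c * l1 S v" unfolding l1_def by (simp add: sum_distrib_left mult.commute)
  finally show ?thesis .
qed

locale mc =
  fixes S Act :: "nat set" and P :: "nat \<Rightarrow> nat \<Rightarrow> nat \<Rightarrow> real" and \<pi> :: "nat \<Rightarrow> nat \<Rightarrow> real"
  assumes finS: "finite S" and finA: "finite Act" and ker: "is_kernel S Act P"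
    and pol: "is_policy S Act \<pi>"
begin

abbreviation "K \<equiv> Ppi Act P \<pi>"
abbreviation "mp n \<equiv> mpow S K n"

lemma P_nonneg: "s \<in> S \<Longrightarrow> a \<in> Act \<Longrightarrow> s' \<in> S \<Longrightarrow> 0 \<le> P s a s'"
  using ker by (auto simp: is_kernel_def)
lemma P_sum: "s \<in> S \<Longrightarrow> a \<in> Act \<Longrightarrow> (\<Sum>s'\<in>S. P s a s') = 1"
  using ker by (auto simp: is_kernel_def)
lemma pi_nonneg: "s \<in> S \<Longrightarrow> a \<in> Act \<Longrightarrow> 0 \<le> \<pi> s a"
  using pol by (auto simp: is_policy_def)
lemma pi_sum: "s \<in> S \<Longrightarrow> (\<Sum>a\<in>Act. \<pi> s a) = 1"
  using pol by (auto simp: is_policy_def)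

lemma piP_sum: "s \<in> S \<Longrightarrow> (\<Sum>a\<in>Act. \<Sum>s'\<in>S. \<pi> s a * P s a s') = 1"
  by (simp add: sum_distrib_left[symmetric] P_sum pi_sum)

lemma K_nonneg: "s \<in> S \<Longrightarrow> s' \<in> S \<Longrightarrow> 0 \<le> K s s'"
  unfolding Ppi_def by (intro sum_nonneg) (simp add: P_nonneg pi_nonneg)

lemma K_sum: "s \<in> S \<Longrightarrow> (\<Sum>s'\<in>S. K s s') = 1"
  unfolding Ppi_def using piP_sum by (subst sum.swap) simp

lemma mp_nonneg: "s \<in> S \<Longrightarrow> s' \<in> S \<Longrightarrow> 0 \<le> mp n s s'"
proof (induction n arbitrary: s')
  case (Suc n) then show ?case by (auto intro!: sum_nonneg mult_nonneg_nonneg K_nonneg)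
qed simp

lemma mp_sum: "s \<in> S \<Longrightarrow> (\<Sum>s'\<in>S. mp n s s') = 1"
proof (induction n)
  case 0 then show ?case using finS by simp
next
  case (Suc n)
  have "(\<Sum>s'\<in>S. mp (Suc n) s s') = (\<Sum>u\<in>S. mp n s u * (\<Sum>s'\<in>S. K u s'))"
    by (simp add: sum_distrib_left) (rule sum.swap)
  also have "\<dots> = 1" using Suc by (simp add: K_sum)
  finally show ?case .
qed

lemma mp_add: "s \<in> S \<Longrightarrow> u \<in> S \<Longrightarrow> mp (a + b) s u = (\<Sum>v\<in>S. mp a s v * mp b v u)"
proof (induction b arbitrary: u)
  case 0 then show ?case using finS by (simp add: if_distrib cong: if_cong)
next
  case (Suc b)
  have "mp (a + Suc b) s u = (\<Sum>w\<in>S. mp (a + b) s w * K w u)" by simp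
  also have "\<dots> = (\<Sum>w\<in>S. (\<Sum>v\<in>S. mp a s v * mp b v w) * K w u)"
    using Suc by (intro sum.cong) auto
  also have "\<dots> = (\<Sum>v\<in>S. mp a s v * mp (Suc b) v u)"
    by (simp add: sum_distrib_left sum_distrib_right mult.assoc) (rule sum.swap)
  finally show ?case .
qed

lemma mp_one: "s \<in> S \<Longrightarrow> mp 1 s v = K s v"
proof -
  assume s: "s \<in> S"
  have "mp 1 s v = (\<Sum>u\<in>S. if s = u then K u v else 0)" by (auto intro!: sum.cong)
  then show ?thesis using finS s by simp
qed

lemma mp_Suc_left: "s \<in> S \<Longrightarrow> u \<in> S \<Longrightarrow> mp (Suc n) s u = (\<Sum>v\<in>S. K s v * mp n v u)"
proof -
  assume su: "s \<in> S" "u \<in> S"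
  have "mp (Suc n) s u = mp (1 + n) s u" by simp
  also have "\<dots> = (\<Sum>v\<in>S. mp 1 s v * mp n v u)" by (rule mp_add[OF su])
  also have "\<dots> = (\<Sum>v\<in>S. K s v * mp n v u)" using su(1) by (simp only: mp_one)
  finally show ?thesis .
qed

lemma vm_mp_add: "u \<in> S \<Longrightarrow> vm S v (mp (a + b)) u = vm S (vm S v (mp a)) (mp b) u"
  unfolding vm_def
  by (simp add: mp_add sum_distrib_left sum_distrib_right mult.assoc) (rule sum.swap)

lemma vm_zero_sum: "(\<Sum>x\<in>S. v x) = 0 \<Longrightarrow> (\<Sum>y\<in>S. vm S v (mp n) y) = 0"
  unfolding vm_def by (subst sum.swap) (simp add: sum_distrib_left[symmetric] mp_sum)

lemma l1_cong: "(\<And>y. y \<in> S \<Longrightarrow> f y = g y) \<Longrightarrow> l1 S f = l1 S g"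
  unfolding l1_def by simp

lemma l1_nonneg: "0 \<le> l1 S v" unfolding l1_def by (simp add: sum_nonneg)

lemma vm_mp0: "y \<in> S \<Longrightarrow> vm S v (mp 0) y = v y"
  unfolding vm_def using finS by (simp add: if_distrib cong: if_cong)

lemma nonexp: "l1 S (vm S w (mp k)) \<le> l1 S w"
proof -
  have "l1 S (vm S w (mp k)) \<le> 1 * l1 S w"
  proof (rule contract_gen[OF finS, where D="\<lambda>_. 0"])
    fix x assume "x \<in> S" then show "(\<Sum>y\<in>S. \<bar>mp k x y - 0\<bar>) \<le> 1"
      by (simp add: mp_nonneg mp_sum abs_of_nonneg)
  qed simp
  then show ?thesis by simp
qed

lemma contract_iter:
  assumes N: "N > 0" and rho: "0 \<le> \<rho>"
    and C: "\<And>v. (\<Sum>x\<in>S. v x) = 0 \<Longrightarrow> l1 S (vm S v (mp N)) \<le> \<rho> * l1 S v"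
    and zs: "(\<Sum>x\<in>S. v x) = 0"
  shows "l1 S (vm S v (mp n)) \<le> \<rho> ^ (n div N) * l1 S v"
proof -
  have kN: "l1 S (vm S w (mp (k * N))) \<le> \<rho> ^ k * l1 S w" if "(\<Sum>x\<in>S. w x) = 0" for w k
  proof (induction k)
    case 0
    have "l1 S (vm S w (mp 0)) = l1 S w" by (rule l1_cong) (simp add: vm_mp0 del: mpow.simps)
    then show ?case by (simp del: mpow.simps)
  next
    case (Suc k)
    have "l1 S (vm S w (mp (Suc k * N))) = l1 S (vm S (vm S w (mp (k * N))) (mp N))"
      by (rule l1_cong) (simp add: vm_mp_add[symmetric] add.commute del: mpow.simps)
    also have "\<dots> \<le> \<rho> * l1 S (vm S w (mp (k * N)))"
      by (rule C) (rule vm_zero_sum[OF that])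
    also have "\<dots> \<le> \<rho> * (\<rho> ^ k * l1 S w)" by (rule mult_left_mono[OF Suc rho])
    finally show ?case by simp
  qed
  have "l1 S (vm S v (mp n)) = l1 S (vm S (vm S v (mp (n mod N))) (mp (n div N * N)))"
    by (rule l1_cong) (simp add: vm_mp_add[symmetric] del: mpow.simps)
  also have "\<dots> \<le> \<rho> ^ (n div N) * l1 S (vm S v (mp (n mod N)))"
    by (rule kN) (rule vm_zero_sum[OF zs])
  also have "\<dots> \<le> \<rho> ^ (n div N) * l1 S v"
    by (rule mult_left_mono[OF nonexp]) (simp add: rho)
  finally show ?thesis .
qed

end

lemma pow_small:
  fixes \<rho> e :: real
  assumes "0 \<le> \<rho>" "\<rho> < 1" "0 < e"
  shows "\<exists>k. \<rho> ^ k < e"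
proof -
  have "\<forall>\<^sub>F n in sequentially. \<bar>\<rho>^n\<bar> < e"
    by (rule Archimedean_eventually_pow_inverse) (use assms in auto)
  then obtain N where "\<forall>n\<ge>N. \<bar>\<rho>^n\<bar> < e" by (auto simp: eventually_sequentially)
  then have "\<bar>\<rho>^N\<bar> < e" by auto
  then show ?thesis by (intro exI[of _ N]) (meson abs_ge_self le_less_trans)
qed

lemma semigroup_large:
  fixes A :: "nat set"
  assumes pos: "\<forall>a\<in>A. a > 0" and add: "\<forall>a\<in>A. \<forall>b\<in>A. a + b \<in> A" and g: "Gcd A = 1"
  shows "\<exists>M. \<forall>n\<ge>M. n \<in> A"
proof -
  have mult: "k * a \<in> A" if "a \<in> A" "k \<ge> 1" for a k
    using that(2)
  proof (induction k)
    case (Suc k) then show ?case using add that(1) by (cases "k = 0") auto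
  qed simp
  have "A \<noteq> {}" using g by auto
  then obtain a0 where a0: "a0 \<in> A" by auto
  define Pd where "Pd d \<longleftrightarrow> d > 0 \<and> (\<exists>x\<in>A. \<exists>y\<in>A. d + y = x)" for d
  have "Pd a0" unfolding Pd_def using a0 pos add by (intro conjI bexI[of _ "a0 + a0"] bexI[of _ a0]) auto
  define \<delta> where "\<delta> = (LEAST d. Pd d)"
  have Pdelta: "Pd \<delta>" unfolding \<delta>_def by (rule LeastI) fact
  then obtain p q where pq: "p \<in> A" "q \<in> A" "\<delta> + q = p" and dpos: "\<delta> > 0" unfolding Pd_def by auto
  have dvd: "\<delta> dvd a" if a: "a \<in> A" for a
  proof (rule ccontr)
    assume nd: "\<not> \<delta> dvd a"
    define k r where "k = a div \<delta>" and "r = a mod \<delta>"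
    have ar: "a = k * \<delta> + r" unfolding k_def r_def by simp
    have rpos: "r > 0" using nd unfolding r_def by (metis dvd_eq_mod_eq_0 gr0I)
    have rlt: "r < \<delta>" unfolding r_def using dpos by simp
    have "Pd r"
    proof (cases "k = 0")
      case True
      then have "r + q = a + q" using ar by simp
      then show ?thesis unfolding Pd_def using rpos a pq add by blast
    next
      case False
      then have k1: "k \<ge> 1" by simp
      have "r + k * p = r + k * (\<delta> + q)" using pq(3) by simp
      also have "\<dots> = a + k * q" using ar by (simp add: algebra_simps)
      finally have "r + k * p = a + k * q" .
      moreover have "k * p \<in> A" "a + k * q \<in> A" using mult[OF pq(1) k1] mult[OF pq(2) k1] add a by auto
      ultimately show ?thesis unfolding Pd_def using rpos by blast
    qed
    then have "\<delta> \<le> r" unfolding \<delta>_def by (rule Least_le)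
    then show False using rlt by simp
  qed
  then have "\<delta> dvd Gcd A" by (simp add: Gcd_greatest)
  then have d1: "\<delta> = 1" using g by simp
  have qpos: "q > 0" using pos pq by auto
  have "n \<in> A" if n: "n \<ge> q * q" for n
  proof -
    define k r where "k = n div q" and "r = n mod q"
    have nr: "n = k * q + r" unfolding k_def r_def by simp
    have rlt: "r < q" unfolding r_def using qpos by simp
    have "q * q div q \<le> n div q" using n by (rule div_le_mono)
    then have kq: "k \<ge> q" unfolding k_def using qpos by simp
    then have kr: "k - r \<ge> 1" using rlt by simp
    have p1: "p = q + 1" using pq(3) d1 by simp
    have kj: "k = (k - r) + r" using kq rlt by simp
    have eq: "n = (k - r) * q + r * p" unfolding p1 using nr kj
      by (metis add.commute add_mult_distrib distrib_left mult.commute nat_mult_1_right add.assoc)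
    show ?thesis
    proof (cases "r = 0")
      case True then show ?thesis using eq mult[OF pq(2) kr] by simp
    next
      case False
      then show ?thesis using eq mult[OF pq(2) kr] mult[OF pq(1), of r] add by auto
    qed
  qed
  then show ?thesis by blast
qed

context mc begin

lemma mp_ge: "s \<in> S \<Longrightarrow> u \<in> S \<Longrightarrow> v \<in> S \<Longrightarrow> mp a s v * mp b v u \<le> mp (a + b) s u"
  by (simp only: mp_add) (rule member_le_sum, auto intro: mult_nonneg_nonneg mp_nonneg simp: finS)

lemma primitive:
  assumes irr: "irreducible S K" and ap: "aperiodic S K"
  shows "\<exists>N>0. \<forall>s\<in>S. \<forall>s'\<in>S. 0 < mp N s s'"
proof -
  have "\<exists>M. \<forall>n\<ge>M. 0 < mp n s s" if s: "s \<in> S" for s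
  proof -
    let ?A = "{n. n > 0 \<and> 0 < mp n s s}"
    have "\<forall>a\<in>?A. \<forall>b\<in>?A. a + b \<in> ?A"
    proof (intro ballI)
      fix a b assume "a \<in> ?A" "b \<in> ?A"
      then have "0 < mp a s s * mp b s s" "a + b > 0" by auto
      then show "a + b \<in> ?A" using mp_ge[OF s s s, of a b] by auto
    qed
    moreover have "Gcd ?A = 1" using ap s unfolding aperiodic_def by auto
    ultimately obtain M where "\<forall>n\<ge>M. n \<in> ?A" using semigroup_large[of ?A] by auto
    then show ?thesis by auto
  qed
  then have "\<forall>s\<in>S. \<exists>M. \<forall>n\<ge>M. 0 < mp n s s" by blast
  from bchoice[OF this] obtain Mf where Mf: "\<forall>s\<in>S. \<forall>n\<ge>Mf s. 0 < mp n s s" by blast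
  have "\<forall>x\<in>S \<times> S. \<exists>n>0. 0 < mp n (fst x) (snd x)" using irr unfolding irreducible_def by auto
  from bchoice[OF this] obtain nf where nf: "\<forall>x\<in>S \<times> S. nf x > 0 \<and> 0 < mp (nf x) (fst x) (snd x)" by blast
  define M where "M = Max (Mf ` S)"
  define L where "L = Max (nf ` (S \<times> S))"
  define N where "N = M + L + 1"
  have "0 < mp N s s'" if ss: "s \<in> S" "s' \<in> S" for s s'
  proof -
    have nle: "nf (s, s') \<le> L" unfolding L_def using ss finS by (intro Max_ge) auto
    have Mle: "Mf s \<le> M" unfolding M_def using ss finS by (intro Max_ge) auto
    have "Mf s \<le> N - nf (s, s')" using nle Mle unfolding N_def by linarith
    then have "0 < mp (N - nf (s, s')) s s" using Mf ss(1) by (simp del: mpow.simps)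
    moreover have "0 < mp (nf (s, s')) s s'" using nf ss by auto
    ultimately have "0 < mp (N - nf (s, s')) s s * mp (nf (s, s')) s s'" by simp
    also have "\<dots> \<le> mp (N - nf (s, s') + nf (s, s')) s s'" by (rule mp_ge[OF ss(1) ss(2) ss(1)])
    also have "N - nf (s, s') + nf (s, s') = N" using nle unfolding N_def by simp
    finally show ?thesis .
  qed
  moreover have "N > 0" unfolding N_def by simp
  ultimately show ?thesis by blast
qed

lemma doeblin:
  assumes N: "N > 0" and pos: "\<forall>s\<in>S. \<forall>s'\<in>S. 0 < mp N s s'" and ne: "S \<noteq> {}"
  shows "\<exists>\<rho>. 0 \<le> \<rho> \<and> \<rho> < 1 \<and> (\<forall>v. (\<Sum>x\<in>S. v x) = 0 \<longrightarrow> l1 S (vm S v (mp N)) \<le> \<rho> * l1 S v)"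
proof -
  define \<delta> where "\<delta> = Min ((\<lambda>x. mp N (fst x) (snd x)) ` (S \<times> S))"
  have dle: "\<delta> \<le> mp N s s'" if "s \<in> S" "s' \<in> S" for s s'
    unfolding \<delta>_def using that finS by (intro Min_le) force+
  have dpos: "\<delta> > 0" unfolding \<delta>_def using finS ne pos by (subst Min_gr_iff) auto
  define \<rho> where "\<rho> = 1 - real (card S) * \<delta>"
  have rows: "(\<Sum>y\<in>S. \<bar>mp N x y - \<delta>\<bar>) = \<rho>" if x: "x \<in> S" for x
  proof -
    have "(\<Sum>y\<in>S. \<bar>mp N x y - \<delta>\<bar>) = (\<Sum>y\<in>S. mp N x y - \<delta>)"
      using dle x by (intro sum.cong) auto
    also have "\<dots> = \<rho>" unfolding \<rho>_def by (simp add: sum_subtractf mp_sum x)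
    finally show ?thesis .
  qed
  obtain x0 where x0: "x0 \<in> S" using ne by auto
  have "0 \<le> \<rho>" using rows[OF x0] by (metis sum_nonneg abs_ge_zero)
  moreover have "\<rho> < 1" unfolding \<rho>_def using dpos finS ne by (simp add: card_gt_0_iff)
  moreover have "l1 S (vm S v (mp N)) \<le> \<rho> * l1 S v" if "(\<Sum>x\<in>S. v x) = 0" for v
    by (rule contract_gen[OF finS, where D="\<lambda>_. \<delta>"]) (use that rows in auto)
  ultimately show ?thesis by blast
qed

lemma vm_mp_row: "s \<in> S \<Longrightarrow> y \<in> S \<Longrightarrow> vm S (mp k s) (mp n) y = mp (k + n) s y"
  unfolding vm_def by (simp add: mp_add del: mpow.simps)

lemma vm_diff: "vm S (\<lambda>x. f x - g x) M y = vm S f M y - vm S g M y"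
  unfolding vm_def by (simp add: left_diff_distrib sum_subtractf)

lemma l1_prob_diff:
  assumes "\<forall>y\<in>S. 0 \<le> f y" "(\<Sum>y\<in>S. f y) = 1" "\<forall>y\<in>S. 0 \<le> g y" "(\<Sum>y\<in>S. g y) = 1"
  shows "l1 S (\<lambda>y. f y - g y) \<le> 2"
proof -
  have "l1 S (\<lambda>y. f y - g y) \<le> (\<Sum>y\<in>S. f y + g y)"
    unfolding l1_def
  proof (intro sum_mono)
    fix y assume "y \<in> S"
    then have "0 \<le> f y" "0 \<le> g y" using assms by auto
    then show "\<bar>f y - g y\<bar> \<le> f y + g y" by linarith
  qed
  also have "\<dots> = 2" using assms by (simp add: sum.distrib)
  finally show ?thesis .
qed

lemma stat_sum: "stationary S K d \<Longrightarrow> (\<Sum>x\<in>S. d x) = 1"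
  unfolding stationary_def by blast
lemma stat_nonneg: "stationary S K d \<Longrightarrow> x \<in> S \<Longrightarrow> 0 \<le> d x"
  unfolding stationary_def by blast
lemma stat_out: "stationary S K d \<Longrightarrow> x \<notin> S \<Longrightarrow> d x = 0"
  unfolding stationary_def by blast
lemma stat_fix: "stationary S K d \<Longrightarrow> y \<in> S \<Longrightarrow> d y = (\<Sum>x\<in>S. d x * K x y)"
  unfolding stationary_def by blast

lemma stat_vm: "stationary S K d \<Longrightarrow> y \<in> S \<Longrightarrow> vm S d (mp n) y = d y"
proof (induction n arbitrary: y)
  case 0 then show ?case by (simp add: vm_mp0 del: mpow.simps)
next
  case (Suc n)
  have one: "vm S w (mp 1) y = (\<Sum>x\<in>S. w x * K x y)" for w
    unfolding vm_def by (intro sum.cong refl) (metis mp_one)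
  have "vm S d (mp (n + 1)) y = vm S (vm S d (mp n)) (mp 1) y" by (rule vm_mp_add[OF Suc.prems(2)])
  also have "\<dots> = (\<Sum>x\<in>S. vm S d (mp n) x * K x y)" by (rule one)
  also have "\<dots> = (\<Sum>x\<in>S. d x * K x y)" using Suc.IH Suc.prems by (intro sum.cong) (auto simp del: mpow.simps)
  also have "\<dots> = d y" using stat_fix[OF Suc.prems] by simp
  finally show ?case by (simp del: mpow.simps)
qed

theorem ergodic:
  assumes irr: "irreducible S K" and ap: "aperiodic S K" and ne: "S \<noteq> {}"
  shows "stationary S K (stat_dist S K) \<and> mix_time S K \<ge> 1 \<and>
    (\<forall>s\<in>S. l1 S (\<lambda>y. mp (mix_time S K) s y - stat_dist S K y) \<le> 1/2)"
proof -
  obtain N where N: "N > 0" "\<forall>s\<in>S. \<forall>s'\<in>S. 0 < mp N s s'" using primitive[OF irr ap] by auto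
  obtain \<rho> where rho: "0 \<le> \<rho>" "\<rho> < 1"
    and C: "\<And>v. (\<Sum>x\<in>S. v x) = 0 \<Longrightarrow> l1 S (vm S v (mp N)) \<le> \<rho> * l1 S v"
    using doeblin[OF N ne] by auto
  have CI: "l1 S (vm S v (mp n)) \<le> \<rho> ^ (n div N) * l1 S v" if "(\<Sum>x\<in>S. v x) = 0" for v n
    by (rule contract_iter[OF N(1) rho(1) C that])
  obtain s0 where s0: "s0 \<in> S" using ne by auto
  have rowdiff: "\<bar>mp (n + k) s0 y - mp n s0 y\<bar> \<le> 2 * \<rho> ^ (n div N)" if y: "y \<in> S" for n k y
  proof -
    let ?v = "\<lambda>x. mp k s0 x - mp 0 s0 x"
    have zs: "(\<Sum>x\<in>S. ?v x) = 0" by (simp add: sum_subtractf mp_sum s0 del: mpow.simps)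
    have "\<bar>mp (n + k) s0 y - mp n s0 y\<bar> \<le> l1 S (\<lambda>y. mp (n + k) s0 y - mp n s0 y)"
      unfolding l1_def using y finS by (intro member_le_sum) auto
    also have "\<dots> = l1 S (vm S ?v (mp n))"
      by (rule l1_cong) (simp add: vm_diff vm_mp_row s0 add.commute del: mpow.simps)
    also have "\<dots> \<le> \<rho> ^ (n div N) * l1 S ?v" by (rule CI[OF zs])
    also have "\<dots> \<le> \<rho> ^ (n div N) * 2"
      by (rule mult_left_mono, rule l1_prob_diff) (auto simp: mp_nonneg mp_sum s0 rho simp del: mpow.simps)
    finally show ?thesis by simp
  qed
  have conv: "convergent (\<lambda>n. mp n s0 y)" if y: "y \<in> S" for y
  proof -
    have "Cauchy (\<lambda>n. mp n s0 y)"
    proof (rule CauchyI)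
      fix e :: real assume e: "0 < e"
      obtain k where k: "\<rho> ^ k < e / 2" using pow_small[OF rho, of "e/2"] e by auto
      have "\<bar>mp m s0 y - mp n s0 y\<bar> < e" if mn: "m \<ge> k * N" "n \<ge> k * N" for m n
      proof -
        have gen: "\<bar>mp b s0 y - mp a s0 y\<bar> < e" if ab: "a \<le> b" "a \<ge> k * N" for a b
        proof -
          have "k * N div N \<le> a div N" using ab(2) by (rule div_le_mono)
          then have "k \<le> a div N" using N(1) by simp
          then have "\<rho> ^ (a div N) \<le> \<rho> ^ k" using rho by (intro power_decreasing) auto
          moreover have "\<bar>mp (a + (b - a)) s0 y - mp a s0 y\<bar> \<le> 2 * \<rho> ^ (a div N)" by (rule rowdiff[OF y])
          ultimately show ?thesis using ab k by simp
        qed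
        show ?thesis
        proof (cases "n \<le> m")
          case True then show ?thesis using gen[of n m] mn by simp
        next
          case False then show ?thesis using gen[of m n] mn by (simp add: abs_minus_commute)
        qed
      qed
      then show "\<exists>M. \<forall>m\<ge>M. \<forall>n\<ge>M. norm (mp m s0 y - mp n s0 y) < e" by auto
    qed
    then show ?thesis by (simp add: Cauchy_convergent_iff)
  qed
  define d where "d y = (if y \<in> S then lim (\<lambda>n. mp n s0 y) else 0)" for y
  have lim: "(\<lambda>n. mp n s0 y) \<longlonglongrightarrow> d y" if "y \<in> S" for y
    using conv[OF that] that unfolding d_def by (simp add: convergent_LIMSEQ_iff)
  have st: "stationary S K d"
    unfolding stationary_def
  proof (intro conjI ballI allI impI)
    fix s assume s: "s \<in> S"
    show "0 \<le> d s" by (rule LIMSEQ_le_const[OF lim[OF s]]) (auto intro: mp_nonneg s0 s)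
  next
    fix s assume "s \<notin> S" then show "d s = 0" unfolding d_def by simp
  next
    have "(\<lambda>n. \<Sum>y\<in>S. mp n s0 y) \<longlonglongrightarrow> (\<Sum>y\<in>S. d y)" by (intro tendsto_sum lim)
    then show "(\<Sum>y\<in>S. d y) = 1" using mp_sum[OF s0] by (simp add: LIMSEQ_const_iff)
  next
    fix s' assume s': "s' \<in> S"
    have "(\<lambda>n. mp (Suc n) s0 s') \<longlonglongrightarrow> d s'" using lim[OF s'] by (rule LIMSEQ_Suc)
    moreover have "(\<lambda>n. mp (Suc n) s0 s') \<longlonglongrightarrow> (\<Sum>s\<in>S. d s * K s s')"
      by (simp only: mpow.simps) (intro tendsto_sum tendsto_mult_right lim)
    ultimately show "d s' = (\<Sum>s\<in>S. d s * K s s')" by (rule LIMSEQ_unique)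
  qed
  have uniq: "d' = d" if st': "stationary S K d'" for d'
  proof -
    let ?v = "\<lambda>x. d' x - d x"
    have zs: "(\<Sum>x\<in>S. ?v x) = 0" using stat_sum[OF st] stat_sum[OF st'] by (simp add: sum_subtractf)
    have "l1 S ?v = l1 S (vm S ?v (mp N))"
      by (rule l1_cong) (simp add: vm_diff stat_vm st st' del: mpow.simps)
    also have "\<dots> \<le> \<rho> * l1 S ?v" by (rule C[OF zs])
    finally have "(1 - \<rho>) * l1 S ?v \<le> 0" by (simp add: algebra_simps)
    then have "l1 S ?v \<le> 0" using rho by (simp add: mult_le_0_iff)
    then have "l1 S ?v = 0" using l1_nonneg[of ?v] by linarith
    then have "\<forall>y\<in>S. \<bar>?v y\<bar> = 0" unfolding l1_def using finS by (subst (asm) sum_nonneg_eq_0_iff) auto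
    then show ?thesis using stat_out[OF st] stat_out[OF st'] by (auto intro!: ext)
  qed
  have sd: "stat_dist S K = d" unfolding stat_dist_def using st uniq by (rule the_equality)
  obtain k where k: "\<rho> ^ k < 1/4" using pow_small[OF rho, of "1/4"] by auto
  define t where "t = (k + 1) * N"
  have tdiv: "t div N = k + 1" unfolding t_def using N(1) by simp
  have good: "l1 S (\<lambda>y. mp t s y - d y) \<le> 1/2" if s: "s \<in> S" for s
  proof -
    let ?v = "\<lambda>x. mp 0 s x - d x"
    have zs: "(\<Sum>x\<in>S. ?v x) = 0" using stat_sum[OF st] s by (simp add: sum_subtractf mp_sum del: mpow.simps)
    have "l1 S (\<lambda>y. mp t s y - d y) = l1 S (vm S ?v (mp t))"
      by (rule l1_cong) (simp add: vm_diff vm_mp_row s stat_vm st del: mpow.simps)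
    also have "\<dots> \<le> \<rho> ^ (t div N) * l1 S ?v" by (rule CI[OF zs])
    also have "\<dots> \<le> \<rho> ^ k * 2"
    proof (rule mult_mono)
      show "\<rho> ^ (t div N) \<le> \<rho> ^ k" unfolding tdiv using rho by (intro power_decreasing) auto
      show "l1 S ?v \<le> 2" by (rule l1_prob_diff) (use stat_sum[OF st] stat_nonneg[OF st] s in \<open>auto simp: mp_nonneg mp_sum simp del: mpow.simps\<close>)
    qed (auto simp: rho l1_nonneg)
    finally show ?thesis using k by simp
  qed
  have tvgood: "tv S (mpow S K t s) (stat_dist S K) \<le> 1/4" if "s \<in> S" for s
    using good[OF that] unfolding tv_def l1_def sd by linarith
  have t1: "t \<ge> 1" using N(1) unfolding t_def by simp
  have ex: "\<exists>t. t \<ge> 1 \<and> (\<forall>s\<in>S. tv S (mpow S K t s) (stat_dist S K) \<le> 1/4)"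
    using tvgood t1 by blast
  have mt: "mix_time S K \<ge> 1 \<and> (\<forall>s\<in>S. tv S (mpow S K (mix_time S K) s) (stat_dist S K) \<le> 1/4)"
    unfolding mix_time_def by (rule LeastI_ex[OF ex])
  then show ?thesis using st sd unfolding tv_def l1_def by auto
qed

end

definition lastst :: "nat \<Rightarrow> trans list \<Rightarrow> nat" where
  "lastst s ys = (if ys = [] then s else snd (snd (last ys)))"

lemma lastst_Cons: "lastst s ((a, b, c) # ys) = lastst c ys"
  unfolding lastst_def by simp

definition nsq :: "'i set \<Rightarrow> ('i \<Rightarrow> real) \<Rightarrow> real" where
  "nsq I v = (\<Sum>i\<in>I. (v i)\<^sup>2)"

lemma nsq_nonneg: "0 \<le> nsq I v" unfolding nsq_def by (simp add: sum_nonneg)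

lemma CS:
  fixes a b :: "'x \<Rightarrow> real"
  shows "(\<Sum>i\<in>I. a i * b i)\<^sup>2 \<le> (\<Sum>i\<in>I. (a i)\<^sup>2) * (\<Sum>i\<in>I. (b i)\<^sup>2)"
proof -
  have "0 \<le> (\<Sum>i\<in>I. \<Sum>j\<in>I. (a i * b j - a j * b i)\<^sup>2)" by (intro sum_nonneg) auto
  also have "\<dots> = (\<Sum>i\<in>I. \<Sum>j\<in>I. (a i)\<^sup>2 * (b j)\<^sup>2 + (a j)\<^sup>2 * (b i)\<^sup>2 - 2 * ((a i * b i) * (a j * b j)))"
    by (intro sum.cong refl) (simp add: power2_eq_square algebra_simps)
  also have "\<dots> = (\<Sum>i\<in>I. \<Sum>j\<in>I. (a i)\<^sup>2 * (b j)\<^sup>2) + (\<Sum>i\<in>I. \<Sum>j\<in>I. (a j)\<^sup>2 * (b i)\<^sup>2)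
      - 2 * (\<Sum>i\<in>I. \<Sum>j\<in>I. (a i * b i) * (a j * b j))"
    by (simp add: sum.distrib sum_subtractf sum_distrib_left)
  also have "(\<Sum>i\<in>I. \<Sum>j\<in>I. (a i)\<^sup>2 * (b j)\<^sup>2) = (\<Sum>i\<in>I. (a i)\<^sup>2) * (\<Sum>i\<in>I. (b i)\<^sup>2)"
    by (simp add: sum_product)
  also have "(\<Sum>i\<in>I. \<Sum>j\<in>I. (a j)\<^sup>2 * (b i)\<^sup>2) = (\<Sum>i\<in>I. (a i)\<^sup>2) * (\<Sum>i\<in>I. (b i)\<^sup>2)"
  proof -
    have "(\<Sum>i\<in>I. (b i)\<^sup>2) * (\<Sum>j\<in>I. (a j)\<^sup>2) = (\<Sum>i\<in>I. \<Sum>j\<in>I. (b i)\<^sup>2 * (a j)\<^sup>2)"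
      by (rule sum_product)
    then show ?thesis by (simp add: mult.commute)
  qed
  also have "(\<Sum>i\<in>I. \<Sum>j\<in>I. (a i * b i) * (a j * b j)) = (\<Sum>i\<in>I. a i * b i)\<^sup>2"
    by (simp add: sum_product power2_eq_square)
  finally show ?thesis by simp
qed

lemma wCS:
  fixes c y :: "'x \<Rightarrow> real"
  shows "(\<Sum>x\<in>X. c x * y x)\<^sup>2 \<le> (\<Sum>x\<in>X. \<bar>c x\<bar>) * (\<Sum>x\<in>X. \<bar>c x\<bar> * (y x)\<^sup>2)"
proof -
  have "\<bar>\<Sum>x\<in>X. c x * y x\<bar> \<le> (\<Sum>x\<in>X. \<bar>c x\<bar> * \<bar>y x\<bar>)"
    by (metis (no_types, lifting) abs_mult sum.cong sum_abs)
  then have "(\<Sum>x\<in>X. c x * y x)\<^sup>2 \<le> (\<Sum>x\<in>X. \<bar>c x\<bar> * \<bar>y x\<bar>)\<^sup>2"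
    by (metis abs_ge_zero power2_abs power_mono)
  also have "(\<Sum>x\<in>X. \<bar>c x\<bar> * \<bar>y x\<bar>) = (\<Sum>x\<in>X. sqrt \<bar>c x\<bar> * (sqrt \<bar>c x\<bar> * \<bar>y x\<bar>))"
    by (intro sum.cong refl) (simp add: mult.assoc[symmetric])
  also have "(\<dots>)\<^sup>2 \<le> (\<Sum>x\<in>X. (sqrt \<bar>c x\<bar>)\<^sup>2) * (\<Sum>x\<in>X. (sqrt \<bar>c x\<bar> * \<bar>y x\<bar>)\<^sup>2)"
    by (rule CS)
  also have "\<dots> = (\<Sum>x\<in>X. \<bar>c x\<bar>) * (\<Sum>x\<in>X. \<bar>c x\<bar> * (y x)\<^sup>2)"
    by (simp add: power_mult_distrib)
  finally show ?thesis .
qed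

lemma nsq_wsum:
  fixes c :: "'x \<Rightarrow> real" and V :: "'x \<Rightarrow> 'i \<Rightarrow> real"
  shows "nsq I (\<lambda>i. \<Sum>x\<in>X. c x * V x i) \<le> (\<Sum>x\<in>X. \<bar>c x\<bar>) * (\<Sum>x\<in>X. \<bar>c x\<bar> * nsq I (V x))"
proof -
  have "nsq I (\<lambda>i. \<Sum>x\<in>X. c x * V x i) \<le> (\<Sum>i\<in>I. (\<Sum>x\<in>X. \<bar>c x\<bar>) * (\<Sum>x\<in>X. \<bar>c x\<bar> * (V x i)\<^sup>2))"
    unfolding nsq_def by (intro sum_mono wCS)
  also have "\<dots> = (\<Sum>x\<in>X. \<bar>c x\<bar>) * (\<Sum>x\<in>X. \<bar>c x\<bar> * nsq I (V x))"
  proof -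
    have "(\<Sum>i\<in>I. (\<Sum>x\<in>X. \<bar>c x\<bar>) * (\<Sum>x\<in>X. \<bar>c x\<bar> * (V x i)\<^sup>2))
        = (\<Sum>x\<in>X. \<bar>c x\<bar>) * (\<Sum>i\<in>I. \<Sum>x\<in>X. \<bar>c x\<bar> * (V x i)\<^sup>2)" by (simp add: sum_distrib_left)
    also have "(\<Sum>i\<in>I. \<Sum>x\<in>X. \<bar>c x\<bar> * (V x i)\<^sup>2) = (\<Sum>x\<in>X. \<Sum>i\<in>I. \<bar>c x\<bar> * (V x i)\<^sup>2)"
      by (rule sum.swap)
    also have "\<dots> = (\<Sum>x\<in>X. \<bar>c x\<bar> * nsq I (V x))" unfolding nsq_def by (simp add: sum_distrib_left)
    finally show ?thesis .
  qed
  finally show ?thesis .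
qed

lemma nsq_wsum_bound:
  fixes c :: "'x \<Rightarrow> real" and V :: "'x \<Rightarrow> 'i \<Rightarrow> real"
  assumes "\<And>x. x \<in> X \<Longrightarrow> nsq I (V x) \<le> M"
  shows "nsq I (\<lambda>i. \<Sum>x\<in>X. c x * V x i) \<le> (\<Sum>x\<in>X. \<bar>c x\<bar>)\<^sup>2 * M"
proof -
  have "(\<Sum>x\<in>X. \<bar>c x\<bar> * nsq I (V x)) \<le> (\<Sum>x\<in>X. \<bar>c x\<bar> * M)"
    by (intro sum_mono mult_left_mono assms) auto
  then have "(\<Sum>x\<in>X. \<bar>c x\<bar>) * (\<Sum>x\<in>X. \<bar>c x\<bar> * nsq I (V x)) \<le> (\<Sum>x\<in>X. \<bar>c x\<bar>) * (\<Sum>x\<in>X. \<bar>c x\<bar> * M)"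
    by (intro mult_left_mono) (auto simp: sum_nonneg)
  also have "\<dots> = (\<Sum>x\<in>X. \<bar>c x\<bar>)\<^sup>2 * M" by (simp add: sum_distrib_right[symmetric] power2_eq_square)
  finally show ?thesis using nsq_wsum[of I c V X] by linarith
qed

lemma inner_bound:
  fixes a b :: "'i \<Rightarrow> real"
  assumes "nsq I a \<le> A2" "nsq I b \<le> B2"
  shows "(\<Sum>i\<in>I. a i * b i)\<^sup>2 \<le> A2 * B2"
proof -
  have "(\<Sum>i\<in>I. a i * b i)\<^sup>2 \<le> nsq I a * nsq I b" unfolding nsq_def by (rule CS)
  also have "\<dots> \<le> A2 * B2" using assms nsq_nonneg by (intro mult_mono) (auto intro: order_trans)
  finally show ?thesis .
qed

lemma nsq_diff_le: "nsq I (\<lambda>i. a i - b i) \<le> 2 * nsq I a + 2 * nsq I b"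
proof -
  have "(a i - b i)\<^sup>2 \<le> 2 * (a i)\<^sup>2 + 2 * (b i)\<^sup>2" for i
    using sum_squares_ge_zero[of "a i + b i" 0] by (simp add: power2_eq_square algebra_simps)
  then have "(\<Sum>i\<in>I. (a i - b i)\<^sup>2) \<le> (\<Sum>i\<in>I. 2 * (a i)\<^sup>2 + 2 * (b i)\<^sup>2)" by (intro sum_mono)
  then show ?thesis unfolding nsq_def by (simp add: sum.distrib sum_distrib_left)
qed

lemma nsq_add_le: "nsq I (\<lambda>i. a i + b i) \<le> 2 * nsq I a + 2 * nsq I b"
  using nsq_diff_le[of I a "\<lambda>i. - b i"] by (simp add: nsq_def)

lemma nsq_scale: "nsq I (\<lambda>i. c * a i) = c\<^sup>2 * nsq I a"
  unfolding nsq_def by (simp add: power_mult_distrib sum_distrib_left)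

context mc begin

abbreviation "TE \<equiv> traj_exp S Act P \<pi>"

definition hh :: "(trans \<Rightarrow> real) \<Rightarrow> nat \<Rightarrow> real" where
  "hh f u = (\<Sum>a\<in>Act. \<Sum>s'\<in>S. \<pi> u a * P u a s' * f (u, a, s'))"

lemma TE_cong:
  "s \<in> S \<Longrightarrow> (\<And>zs. length zs = n \<Longrightarrow> set zs \<subseteq> S \<times> Act \<times> S \<Longrightarrow> F zs = G zs) \<Longrightarrow> TE n s F = TE n s G"
proof (induction n arbitrary: s F G)
  case 0 then show ?case by simp
next
  case (Suc n)
  show ?case unfolding traj_exp.simps
  proof (intro sum.cong refl arg_cong2[where f="(*)"])
    fix a s' assume a: "a \<in> Act" and s': "s' \<in> S"
    show "TE n s' (\<lambda>zs. F ((s, a, s') # zs)) = TE n s' (\<lambda>zs. G ((s, a, s') # zs))"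
      by (rule Suc.IH[OF s']) (use Suc.prems a s' in auto)
  qed
qed

lemma TE_mono:
  "s \<in> S \<Longrightarrow> (\<And>zs. length zs = n \<Longrightarrow> set zs \<subseteq> S \<times> Act \<times> S \<Longrightarrow> F zs \<le> G zs) \<Longrightarrow> TE n s F \<le> TE n s G"
proof (induction n arbitrary: s F G)
  case 0 then show ?case by simp
next
  case (Suc n)
  show ?case unfolding traj_exp.simps
  proof (intro sum_mono mult_left_mono)
    fix a s' assume a: "a \<in> Act" and s': "s' \<in> S"
    show "TE n s' (\<lambda>zs. F ((s, a, s') # zs)) \<le> TE n s' (\<lambda>zs. G ((s, a, s') # zs))"
      by (rule Suc.IH[OF s']) (use Suc.prems a s' in auto)
    show "0 \<le> \<pi> s a * P s a s'" using Suc.prems a s' by (simp add: P_nonneg pi_nonneg)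
  qed
qed

lemma TE_const: "s \<in> S \<Longrightarrow> TE n s (\<lambda>_. c) = c"
proof (induction n arbitrary: s)
  case (Suc n)
  have "TE (Suc n) s (\<lambda>_. c) = (\<Sum>a\<in>Act. \<Sum>s'\<in>S. \<pi> s a * P s a s' * c)"
    using Suc by (simp cong: sum.cong)
  also have "\<dots> = (\<Sum>a\<in>Act. \<Sum>s'\<in>S. \<pi> s a * P s a s') * c" by (simp add: sum_distrib_right)
  finally show ?case using piP_sum[OF Suc.prems] by simp
qed simp

lemma TE_add: "TE n s (\<lambda>zs. F zs + G zs) = TE n s F + TE n s G"
proof (induction n arbitrary: s F G)
  case (Suc n) then show ?case by (simp add: distrib_left sum.distrib)
qed simp

lemma TE_scale: "TE n s (\<lambda>zs. c * F zs) = c * TE n s F"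
proof (induction n arbitrary: s F)
  case (Suc n) then show ?case by (simp add: sum_distrib_left mult.left_commute)
qed simp

lemma TE_zero: "TE n s (\<lambda>_. 0) = 0"
  using TE_scale[of n s 0 "\<lambda>_. 0"] by simp

lemma TE_diff: "TE n s (\<lambda>zs. F zs - G zs) = TE n s F - TE n s G"
  using TE_add[of n s F "\<lambda>zs. (-1) * G zs"] TE_scale[of n s "-1" G] by simp

lemma TE_sum: "TE n s (\<lambda>zs. \<Sum>t\<in>T. F t zs) = (\<Sum>t\<in>T. TE n s (F t))"
proof (cases "finite T")
  case True then show ?thesis
  proof (induction T rule: finite_induct)
    case empty then show ?case by (simp add: TE_zero)
  next
    case (insert x T) then show ?case by (simp add: TE_add)
  qed
qed (simp add: TE_zero)

lemma TE_markov: "TE (k + n) s F = TE k s (\<lambda>ys. TE n (lastst s ys) (\<lambda>zs. F (ys @ zs)))"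
proof (induction k arbitrary: s F)
  case 0 then show ?case by (simp add: lastst_def)
next
  case (Suc k)
  show ?case by (simp add: Suc.IH lastst_Cons)
qed

lemma TE_marg: "s \<in> S \<Longrightarrow> t < n \<Longrightarrow> TE n s (\<lambda>zs. f (zs ! t)) = (\<Sum>u\<in>S. mp t s u * hh f u)"
proof (induction t arbitrary: s n)
  case 0
  then obtain n' where n: "n = Suc n'" by (cases n) auto
  have "TE n s (\<lambda>zs. f (zs ! 0)) = (\<Sum>a\<in>Act. \<Sum>s'\<in>S. \<pi> s a * P s a s' * f (s, a, s'))"
    unfolding n by (simp add: TE_const cong: sum.cong)
  also have "\<dots> = hh f s" by (simp add: hh_def)
  also have "\<dots> = (\<Sum>u\<in>S. mp 0 s u * hh f u)"
  proof -
    have "(\<Sum>u\<in>S. mp 0 s u * hh f u) = (\<Sum>u\<in>S. if s = u then hh f u else 0)" by (intro sum.cong) auto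
    then show ?thesis using finS 0 by simp
  qed
  finally show ?case .
next
  case (Suc t)
  then obtain n' where n: "n = Suc n'" and tn: "t < n'" by (cases n) auto
  have "TE n s (\<lambda>zs. f (zs ! Suc t)) = (\<Sum>a\<in>Act. \<Sum>s'\<in>S. \<pi> s a * P s a s' * (\<Sum>u\<in>S. mp t s' u * hh f u))"
    unfolding n by (simp add: Suc.IH[OF _ tn] cong: sum.cong)
  also have "\<dots> = (\<Sum>a\<in>Act. \<Sum>s'\<in>S. \<Sum>u\<in>S. \<pi> s a * P s a s' * mp t s' u * hh f u)"
    by (simp add: sum_distrib_left mult.assoc)
  also have "\<dots> = (\<Sum>s'\<in>S. \<Sum>u\<in>S. \<Sum>a\<in>Act. \<pi> s a * P s a s' * mp t s' u * hh f u)"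
    by (subst sum.swap) (simp add: sum.swap[of _ Act])
  also have "\<dots> = (\<Sum>u\<in>S. \<Sum>s'\<in>S. K s s' * mp t s' u * hh f u)"
    by (subst sum.swap) (simp add: Ppi_def sum_distrib_right)
  also have "\<dots> = (\<Sum>u\<in>S. mp (Suc t) s u * hh f u)"
    by (intro sum.cong refl) (simp add: mp_Suc_left[OF Suc.prems(1)] sum_distrib_right del: mpow.simps)
  finally show ?case .
qed

lemma lastst_in: "s \<in> S \<Longrightarrow> set ys \<subseteq> S \<times> Act \<times> S \<Longrightarrow> lastst s ys \<in> S"
  unfolding lastst_def using last_in_set by fastforce

lemma TE_pair:
  assumes s: "s \<in> S" and tu: "t < u" "u < n"
  shows "TE n s (\<lambda>zs. f (zs ! t) * g (zs ! u)) =
    (\<Sum>v\<in>S. mp t s v * hh (\<lambda>z. f z * (\<Sum>x\<in>S. mp (u - Suc t) (snd (snd z)) x * hh g x)) v)"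
proof -
  define \<beta> where "\<beta> w = (\<Sum>x\<in>S. mp (u - Suc t) w x * hh g x)" for w
  have n: "n = Suc t + (n - Suc t)" using tu by simp
  have "TE n s (\<lambda>zs. f (zs ! t) * g (zs ! u)) =
      TE (Suc t) s (\<lambda>ys. TE (n - Suc t) (lastst s ys) (\<lambda>zs. f ((ys @ zs) ! t) * g ((ys @ zs) ! u)))"
    by (subst n) (rule TE_markov)
  also have "\<dots> = TE (Suc t) s (\<lambda>ys. (\<lambda>z. f z * \<beta> (snd (snd z))) (ys ! t))"
  proof (rule TE_cong[OF s])
    fix ys assume len: "length ys = Suc t" and v: "set ys \<subseteq> S \<times> Act \<times> S"
    have ls: "lastst s ys \<in> S" by (rule lastst_in[OF s v])
    have "TE (n - Suc t) (lastst s ys) (\<lambda>zs. f ((ys @ zs) ! t) * g ((ys @ zs) ! u))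
        = TE (n - Suc t) (lastst s ys) (\<lambda>zs. f (ys ! t) * g (zs ! (u - Suc t)))"
      using len tu by (intro TE_cong[OF ls]) (simp add: nth_append)
    also have "\<dots> = f (ys ! t) * TE (n - Suc t) (lastst s ys) (\<lambda>zs. g (zs ! (u - Suc t)))"
      by (rule TE_scale)
    also have "\<dots> = f (ys ! t) * \<beta> (lastst s ys)"
      unfolding \<beta>_def using tu by (subst TE_marg[OF ls]) auto
    finally have fin: "TE (n - Suc t) (lastst s ys) (\<lambda>zs. f ((ys @ zs) ! t) * g ((ys @ zs) ! u)) =
        f (ys ! t) * \<beta> (lastst s ys)" .
    have lsq: "lastst s ys = snd (snd (ys ! t))"
      using len unfolding lastst_def by (auto simp: last_conv_nth)
    from fin show "TE (n - Suc t) (lastst s ys) (\<lambda>zs. f ((ys @ zs) ! t) * g ((ys @ zs) ! u)) =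
        (\<lambda>z. f z * \<beta> (snd (snd z))) (ys ! t)" by (simp add: lsq)
  qed
  also have "\<dots> = (\<Sum>v\<in>S. mp t s v * hh (\<lambda>z. f z * \<beta> (snd (snd z))) v)"
    by (rule TE_marg[OF s]) simp
  finally show ?thesis unfolding \<beta>_def .
qed

end

lemma geom_half_sum: "(\<Sum>j<k. (1/2::real)^j) = 2 - 2 * (1/2)^k"
  by (induction k) auto

lemma sum_div_geom:
  assumes tau: "\<tau> \<ge> (1::nat)"
  shows "(\<Sum>t<n. (1/2::real) ^ (t div \<tau>)) \<le> 2 * real \<tau>"
proof -
  have blk: "(\<Sum>t<k * \<tau>. (1/2::real) ^ (t div \<tau>)) = real \<tau> * (\<Sum>j<k. (1/2)^j)" for k
  proof (induction k)
    case 0 then show ?case by simp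
  next
    case (Suc k)
    have "(\<Sum>t<Suc k * \<tau>. (1/2::real) ^ (t div \<tau>)) =
        (\<Sum>t\<in>{0..<k * \<tau>}. (1/2::real) ^ (t div \<tau>)) + (\<Sum>t\<in>{k * \<tau>..<k * \<tau> + \<tau>}. (1/2::real) ^ (t div \<tau>))"
      by (simp add: lessThan_atLeast0 sum.atLeastLessThan_concat add.commute)
    also have "(\<Sum>t\<in>{k * \<tau>..<k * \<tau> + \<tau>}. (1/2::real) ^ (t div \<tau>)) = (\<Sum>t\<in>{k * \<tau>..<k * \<tau> + \<tau>}. (1/2::real) ^ k)"
    proof (intro sum.cong refl)
      fix t assume "t \<in> {k * \<tau>..<k * \<tau> + \<tau>}"
      then obtain r where "t = k * \<tau> + r" "r < \<tau>" by (metis atLeastLessThan_iff le_add_diff_inverse nat_add_left_cancel_less)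
      then have "t div \<tau> = k" using tau by simp
      then show "(1/2::real) ^ (t div \<tau>) = (1/2) ^ k" by simp
    qed
    finally show ?case using Suc by (simp add: lessThan_atLeast0 algebra_simps)
  qed
  have "(\<Sum>t<n. (1/2::real) ^ (t div \<tau>)) \<le> (\<Sum>t<n * \<tau>. (1/2::real) ^ (t div \<tau>))"
    using tau by (intro sum_mono2) auto
  also have "\<dots> = real \<tau> * (2 - 2 * (1/2)^n)" by (simp add: blk geom_half_sum)
  also have "\<dots> \<le> 2 * real \<tau>" by (simp add: algebra_simps)
  finally show ?thesis .
qed

lemma reidx:
  fixes g :: "nat \<Rightarrow> real"
  assumes "inj_on \<phi> A" "\<phi> ` A \<subseteq> B" "finite B" "\<And>k. k \<in> B \<Longrightarrow> 0 \<le> g k"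
  shows "(\<Sum>u\<in>A. g (\<phi> u)) \<le> (\<Sum>k\<in>B. g k)"
proof -
  have "(\<Sum>u\<in>A. g (\<phi> u)) = (\<Sum>k\<in>\<phi> ` A. g k)" using assms(1) by (simp add: sum.reindex)
  also have "\<dots> \<le> (\<Sum>k\<in>B. g k)" using assms by (intro sum_mono2) auto
  finally show ?thesis .
qed

definition ndist :: "nat \<Rightarrow> nat \<Rightarrow> nat" where "ndist t u = (if t \<le> u then u - t else t - u)"

lemma sum_ndist:
  fixes g :: "nat \<Rightarrow> real"
  assumes g: "\<And>k. 0 \<le> g k" and t: "t < N"
  shows "(\<Sum>u<N. g (ndist t u)) \<le> 2 * (\<Sum>k<N. g k)"
proof -
  have split: "{..<N} = ({..<N} \<inter> {..t}) \<union> ({..<N} \<inter> {t<..})" by auto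
  have "(\<Sum>u<N. g (ndist t u)) = (\<Sum>u\<in>{..<N} \<inter> {..t}. g (ndist t u)) + (\<Sum>u\<in>{..<N} \<inter> {t<..}. g (ndist t u))"
    by (subst split, rule sum.union_disjoint) auto
  also have "(\<Sum>u\<in>{..<N} \<inter> {..t}. g (ndist t u)) = (\<Sum>u\<in>{..<N} \<inter> {..t}. g (t - u))"
    by (intro sum.cong refl) (auto simp: ndist_def)
  also have "\<dots> \<le> (\<Sum>k<N. g k)"
    by (rule reidx) (use t g in \<open>auto simp: inj_on_def\<close>)
  also have "(\<Sum>u\<in>{..<N} \<inter> {t<..}. g (ndist t u)) = (\<Sum>u\<in>{..<N} \<inter> {t<..}. g (u - t))"
    by (intro sum.cong refl) (auto simp: ndist_def)
  also have "\<dots> \<le> (\<Sum>k<N. g k)"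
    by (rule reidx) (use t g in \<open>auto simp: inj_on_def\<close>)
  finally show ?thesis by simp
qed

locale mcmix = mc +
  fixes \<tau> :: nat
  assumes stat: "stationary S K (stat_dist S K)"
    and tau1: "\<tau> \<ge> 1"
    and mix: "\<forall>s\<in>S. l1 S (\<lambda>y. mp \<tau> s y - stat_dist S K y) \<le> 1/2"
begin

abbreviation "d \<equiv> stat_dist S K"

definition err :: "nat \<Rightarrow> nat \<Rightarrow> real" where
  "err t s = l1 S (\<lambda>y. mp t s y - d y)"

lemma err_nonneg: "0 \<le> err t s" unfolding err_def by (rule l1_nonneg)

lemma err_le2: "s \<in> S \<Longrightarrow> err t s \<le> 2"
  unfolding err_def
  by (rule l1_prob_diff) (use stat_sum[OF stat] stat_nonneg[OF stat] in \<open>auto simp: mp_nonneg mp_sum simp del: mpow.simps\<close>)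

lemma err_bound: assumes s: "s \<in> S" shows "err t s \<le> 2 * (1/2) ^ (t div \<tau>)"
proof -
  have C: "l1 S (vm S v (mp \<tau>)) \<le> 1/2 * l1 S v" if "(\<Sum>x\<in>S. v x) = 0" for v
    by (rule contract_gen[OF finS, where D=d]) (use that mix in \<open>auto simp: l1_def\<close>)
  let ?v = "\<lambda>x. mp 0 s x - d x"
  have zs: "(\<Sum>x\<in>S. ?v x) = 0" using stat_sum[OF stat] s by (simp add: sum_subtractf mp_sum del: mpow.simps)
  have "err t s = l1 S (vm S ?v (mp t))"
    unfolding err_def by (rule l1_cong) (simp add: vm_diff vm_mp_row s stat_vm stat del: mpow.simps)
  also have "\<dots> \<le> (1/2) ^ (t div \<tau>) * l1 S ?v"
    by (rule contract_iter[OF _ _ C zs]) (use tau1 in auto)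
  also have "\<dots> \<le> (1/2) ^ (t div \<tau>) * 2"
    using err_le2[OF s, of 0] unfolding err_def by (intro mult_left_mono) auto
  finally show ?thesis by simp
qed

lemma sum_err: "s \<in> S \<Longrightarrow> (\<Sum>t<n. err t s) \<le> 4 * real \<tau>"
proof -
  assume s: "s \<in> S"
  have "(\<Sum>t<n. err t s) \<le> (\<Sum>t<n. 2 * (1/2) ^ (t div \<tau>))" by (intro sum_mono err_bound s)
  also have "\<dots> = 2 * (\<Sum>t<n. (1/2) ^ (t div \<tau>))" by (simp add: sum_distrib_left)
  also have "\<dots> \<le> 2 * (2 * real \<tau>)" using sum_div_geom[OF tau1, of n] by linarith
  finally show ?thesis by simp
qed

lemma statE_hh: "statE S Act P \<pi> F = (\<Sum>u\<in>S. d u * hh F u)"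
  unfolding statE_def hh_def Let_def by (simp add: sum_distrib_left mult.assoc)

lemma hh_abs: assumes s: "s \<in> S" and R: "\<And>a s'. a \<in> Act \<Longrightarrow> s' \<in> S \<Longrightarrow> \<bar>R (s, a, s')\<bar> \<le> M"
  shows "\<bar>hh R s\<bar> \<le> M"
proof -
  have "\<bar>hh R s\<bar> \<le> (\<Sum>a\<in>Act. \<Sum>s'\<in>S. \<pi> s a * P s a s' * M)"
    unfolding hh_def
    by (rule order_trans[OF sum_abs], rule sum_mono, rule order_trans[OF sum_abs], rule sum_mono)
       (simp add: abs_mult P_nonneg pi_nonneg s R mult_left_mono)
  also have "\<dots> = M" using piP_sum[OF s] by (simp add: sum_distrib_right[symmetric])
  finally show ?thesis .
qed

lemma mp_wabs: assumes s: "s \<in> S" and g: "\<And>v. v \<in> S \<Longrightarrow> \<bar>g v\<bar> \<le> M"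
  shows "\<bar>\<Sum>v\<in>S. mp t s v * g v\<bar> \<le> M"
proof -
  have "\<bar>\<Sum>v\<in>S. mp t s v * g v\<bar> \<le> (\<Sum>v\<in>S. mp t s v * M)"
    by (rule order_trans[OF sum_abs], rule sum_mono) (simp add: abs_mult mp_nonneg s g mult_left_mono del: mpow.simps)
  also have "\<dots> = M" using mp_sum[OF s] by (simp add: sum_distrib_right[symmetric] del: mpow.simps)
  finally show ?thesis .
qed

lemma hh_const: "s \<in> S \<Longrightarrow> hh (\<lambda>_. c) s = c"
  unfolding hh_def using piP_sum by (simp add: sum_distrib_right[symmetric])

lemma hh_diff: "hh (\<lambda>z. f z - g z) s = hh f s - hh g s"
  unfolding hh_def by (simp add: right_diff_distrib sum_subtractf)

end

locale mlvec = mcmix +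
  fixes X :: "trans \<Rightarrow> 'i \<Rightarrow> real" and I :: "'i set" and B2 :: real and s0 :: nat
  assumes finI: "finite I" and Xb: "\<And>z. z \<in> S \<times> Act \<times> S \<Longrightarrow> nsq I (X z) \<le> B2"
    and s0: "s0 \<in> S"
begin

definition "Xbar i = statE S Act P \<pi> (\<lambda>z. X z i)"
definition "H u i = hh (\<lambda>z. X z i) u"
definition "Y z i = X z i - Xbar i"

lemma B2_nonneg: "0 \<le> B2"
proof -
  obtain s where s: "s \<in> S" using s0 by auto
  have "Act \<noteq> {}" using pi_sum[OF s] by auto
  then obtain a where "a \<in> Act" by auto
  with s have "(s, a, s) \<in> S \<times> Act \<times> S" by auto
  then show ?thesis using Xb nsq_nonneg by (metis order_trans)
qed

lemma H_bound: assumes u: "u \<in> S" shows "nsq I (H u) \<le> B2"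
proof -
  have inner: "nsq I (\<lambda>i. \<Sum>s'\<in>S. P u a s' * X (u, a, s') i) \<le> B2" if a: "a \<in> Act" for a
  proof -
    have "nsq I (\<lambda>i. \<Sum>s'\<in>S. P u a s' * X (u, a, s') i) \<le> (\<Sum>s'\<in>S. \<bar>P u a s'\<bar>)\<^sup>2 * B2"
      by (rule nsq_wsum_bound) (use Xb u a in auto)
    also have "(\<Sum>s'\<in>S. \<bar>P u a s'\<bar>) = 1" using P_sum[OF u a] P_nonneg[OF u a] by simp
    finally show ?thesis by simp
  qed
  have Heq: "H u = (\<lambda>i. \<Sum>a\<in>Act. \<pi> u a * (\<Sum>s'\<in>S. P u a s' * X (u, a, s') i))"
    unfolding H_def hh_def by (simp add: sum_distrib_left mult.assoc)
  have "nsq I (\<lambda>i. \<Sum>a\<in>Act. \<pi> u a * (\<Sum>s'\<in>S. P u a s' * X (u, a, s') i)) \<le> (\<Sum>a\<in>Act. \<bar>\<pi> u a\<bar>)\<^sup>2 * B2"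
    by (rule nsq_wsum_bound) (use inner in auto)
  moreover have "(\<Sum>a\<in>Act. \<bar>\<pi> u a\<bar>) = 1" using pi_sum[OF u] pi_nonneg[OF u] by simp
  ultimately show ?thesis unfolding Heq by simp
qed

lemma Xbar_eq: "Xbar i = (\<Sum>u\<in>S. d u * H u i)"
  unfolding Xbar_def H_def by (rule statE_hh)

lemma Xbar_bound: "nsq I Xbar \<le> B2"
proof -
  have eq: "Xbar = (\<lambda>i. \<Sum>u\<in>S. d u * H u i)" by (rule ext) (rule Xbar_eq)
  have "nsq I (\<lambda>i. \<Sum>u\<in>S. d u * H u i) \<le> (\<Sum>u\<in>S. \<bar>d u\<bar>)\<^sup>2 * B2" by (rule nsq_wsum_bound) (rule H_bound)
  moreover have "(\<Sum>u\<in>S. \<bar>d u\<bar>) = 1"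
  proof -
    have "(\<Sum>u\<in>S. \<bar>d u\<bar>) = (\<Sum>u\<in>S. d u)" by (intro sum.cong refl) (simp add: stat_nonneg[OF stat])
    then show ?thesis using stat_sum[OF stat] by simp
  qed
  ultimately show ?thesis unfolding eq by simp
qed

lemma Y_bound: "z \<in> S \<times> Act \<times> S \<Longrightarrow> nsq I (Y z) \<le> 4 * B2"
  using nsq_diff_le[of I "X z" Xbar] Xb[of z] Xbar_bound unfolding Y_def by (simp add: fun_eq_iff)

lemma hhY: "u \<in> S \<Longrightarrow> hh (\<lambda>z. Y z i) u = H u i - Xbar i"
  unfolding Y_def H_def by (simp add: hh_diff hh_const)

definition "\<beta> k w i = (\<Sum>x\<in>S. mp k w x * hh (\<lambda>z. Y z i) x)"

lemma beta_eq: "w \<in> S \<Longrightarrow> \<beta> k w i = (\<Sum>x\<in>S. (mp k w x - d x) * H x i)"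
proof -
  assume w: "w \<in> S"
  have "\<beta> k w i = (\<Sum>x\<in>S. mp k w x * H x i) - (\<Sum>x\<in>S. mp k w x) * Xbar i"
    unfolding \<beta>_def by (simp add: hhY right_diff_distrib sum_subtractf sum_distrib_right del: mpow.simps)
  also have "\<dots> = (\<Sum>x\<in>S. mp k w x * H x i) - (\<Sum>x\<in>S. d x * H x i)"
    by (simp add: mp_sum w Xbar_eq del: mpow.simps)
  finally show ?thesis by (simp add: left_diff_distrib sum_subtractf)
qed

lemma wdiff_bound: assumes w: "w \<in> S"
  shows "nsq I (\<lambda>i. \<Sum>x\<in>S. (mp k w x - d x) * H x i) \<le> (err k w)\<^sup>2 * B2"
proof -
  have "nsq I (\<lambda>i. \<Sum>x\<in>S. (mp k w x - d x) * H x i) \<le> (\<Sum>x\<in>S. \<bar>mp k w x - d x\<bar>)\<^sup>2 * B2"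
    by (rule nsq_wsum_bound) (rule H_bound)
  then show ?thesis unfolding err_def l1_def .
qed

lemma beta_bound: "w \<in> S \<Longrightarrow> nsq I (\<beta> k w) \<le> (err k w)\<^sup>2 * B2"
proof -
  assume w: "w \<in> S"
  have "\<beta> k w = (\<lambda>i. \<Sum>x\<in>S. (mp k w x - d x) * H x i)" by (rule ext) (simp add: beta_eq w del: mpow.simps)
  then show ?thesis using wdiff_bound[OF w, of k] by simp
qed

lemma inner_Y_beta:
  assumes z: "z \<in> S \<times> Act \<times> S" and w: "w \<in> S"
  shows "\<bar>\<Sum>i\<in>I. Y z i * \<beta> k w i\<bar> \<le> 4 * B2 * (1/2) ^ (k div \<tau>)"
proof -
  have "(\<Sum>i\<in>I. Y z i * \<beta> k w i)\<^sup>2 \<le> (4 * B2) * ((err k w)\<^sup>2 * B2)"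
    by (rule inner_bound[OF Y_bound[OF z] beta_bound[OF w]])
  also have "\<dots> = (2 * B2 * err k w)\<^sup>2" by (simp add: power2_eq_square)
  finally have sq: "(\<Sum>i\<in>I. Y z i * \<beta> k w i)\<^sup>2 \<le> (2 * B2 * err k w)\<^sup>2" .
  have nn: "0 \<le> 2 * B2 * err k w" using B2_nonneg err_nonneg by simp
  have "\<bar>\<Sum>i\<in>I. Y z i * \<beta> k w i\<bar> \<le> \<bar>2 * B2 * err k w\<bar>" using sq by (simp only: abs_le_square_iff)
  also have "\<dots> = 2 * B2 * err k w" using nn by (rule abs_of_nonneg)
  also have "\<dots> \<le> 2 * B2 * (2 * (1/2) ^ (k div \<tau>))"
    using err_bound[OF w, of k] B2_nonneg by (intro mult_left_mono) auto
  finally show ?thesis by simp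
qed

lemma hh_add: "hh (\<lambda>z. f z + g z) s = hh f s + hh g s"
  unfolding hh_def by (simp add: distrib_left sum.distrib)

lemma hh_sum: "hh (\<lambda>z. \<Sum>i\<in>J. f i z) s = (\<Sum>i\<in>J. hh (f i) s)"
proof (cases "finite J")
  case True then show ?thesis
    by (induction J rule: finite_induct) (auto simp: hh_add hh_def)
qed (simp add: hh_def)

abbreviation "cov n t u \<equiv> TE n s0 (\<lambda>zs. \<Sum>i\<in>I. Y (zs ! t) i * Y (zs ! u) i)"

lemma cov_lt: assumes tu: "t < u" "u < n"
  shows "\<bar>cov n t u\<bar> \<le> 4 * B2 * (1/2) ^ ((u - Suc t) div \<tau>)"
proof -
  have "cov n t u = (\<Sum>i\<in>I. TE n s0 (\<lambda>zs. Y (zs ! t) i * Y (zs ! u) i))" by (rule TE_sum)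
  also have "\<dots> = (\<Sum>i\<in>I. \<Sum>v\<in>S. mp t s0 v * hh (\<lambda>z. Y z i * \<beta> (u - Suc t) (snd (snd z)) i) v)"
  proof (intro sum.cong refl)
    fix i
    show "TE n s0 (\<lambda>zs. Y (zs ! t) i * Y (zs ! u) i) =
        (\<Sum>v\<in>S. mp t s0 v * hh (\<lambda>z. Y z i * \<beta> (u - Suc t) (snd (snd z)) i) v)"
      unfolding \<beta>_def by (rule TE_pair[OF s0 tu, of "\<lambda>z. Y z i" "\<lambda>z. Y z i"])
  qed
  also have "\<dots> = (\<Sum>v\<in>S. mp t s0 v * hh (\<lambda>z. \<Sum>i\<in>I. Y z i * \<beta> (u - Suc t) (snd (snd z)) i) v)"
    by (subst sum.swap) (simp add: hh_sum sum_distrib_left del: mpow.simps)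
  also have "\<bar>\<dots>\<bar> \<le> 4 * B2 * (1/2) ^ ((u - Suc t) div \<tau>)"
  proof (rule mp_wabs[OF s0])
    fix v assume v: "v \<in> S"
    show "\<bar>hh (\<lambda>z. \<Sum>i\<in>I. Y z i * \<beta> (u - Suc t) (snd (snd z)) i) v\<bar> \<le> 4 * B2 * (1/2) ^ ((u - Suc t) div \<tau>)"
      by (rule hh_abs[OF v]) (use v in \<open>auto intro!: inner_Y_beta\<close>)
  qed
  finally show ?thesis .
qed

lemma cov_sym: "cov n t u = cov n u t"
  by (simp add: mult.commute)

lemma cov_eq: assumes t: "t < n" shows "0 \<le> cov n t t \<and> cov n t t \<le> 4 * B2"
proof
  have valid: "zs ! t \<in> S \<times> Act \<times> S" if "length zs = n" "set zs \<subseteq> S \<times> Act \<times> S" for zs :: "trans list"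
    using that t nth_mem by blast
  show "0 \<le> cov n t t"
    using TE_mono[OF s0, of n "\<lambda>_. 0" "\<lambda>zs. \<Sum>i\<in>I. Y (zs ! t) i * Y (zs ! t) i"]
    by (simp add: TE_const[OF s0] sum_nonneg)
  show "cov n t t \<le> 4 * B2"
  proof -
    have "cov n t t \<le> TE n s0 (\<lambda>_. 4 * B2)"
    proof (rule TE_mono[OF s0])
      fix zs :: "trans list" assume "length zs = n" "set zs \<subseteq> S \<times> Act \<times> S"
      then show "(\<Sum>i\<in>I. Y (zs ! t) i * Y (zs ! t) i) \<le> 4 * B2"
        using Y_bound[OF valid] unfolding nsq_def by (simp add: power2_eq_square)
    qed
    then show ?thesis by (simp add: TE_const[OF s0])
  qed
qed

lemma half_pow_shift: "(1/2::real) ^ (a div \<tau>) \<le> 2 * (1/2) ^ (Suc a div \<tau>)"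
proof -
  have "Suc a div \<tau> \<le> (a + \<tau>) div \<tau>" by (rule div_le_mono) (use tau1 in simp)
  also have "\<dots> = a div \<tau> + 1" using tau1 by simp
  finally have "(1/2::real) ^ (a div \<tau> + 1) \<le> (1/2) ^ (Suc a div \<tau>)" by (intro power_decreasing) auto
  then show ?thesis by simp
qed

lemma cov_all: assumes "t < n" "u < n"
  shows "\<bar>cov n t u\<bar> \<le> 8 * B2 * (1/2) ^ (ndist t u div \<tau>)"
proof -
  have lt: "\<bar>cov n a b\<bar> \<le> 8 * B2 * (1/2) ^ ((b - a) div \<tau>)" if ab: "a < b" "b < n" for a b
  proof -
    have "\<bar>cov n a b\<bar> \<le> 4 * B2 * (1/2) ^ ((b - Suc a) div \<tau>)" by (rule cov_lt[OF ab])
    also have "\<dots> \<le> 4 * B2 * (2 * (1/2) ^ (Suc (b - Suc a) div \<tau>))"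
      using B2_nonneg by (intro mult_left_mono half_pow_shift) auto
    also have "Suc (b - Suc a) = b - a" using ab by simp
    finally show ?thesis by simp
  qed
  consider "t < u" | "t = u" | "u < t" by arith
  then show ?thesis
  proof cases
    case 1 then show ?thesis using lt[OF 1 assms(2)] by (simp add: ndist_def)
  next
    case 2 then show ?thesis using cov_eq[OF assms(1)] B2_nonneg by (simp add: ndist_def)
  next
    case 3 then show ?thesis using lt[OF 3 assms(1)] cov_sym[of n t u] by (simp add: ndist_def)
  qed
qed

lemma lvl_Y: "lvl (\<lambda>z. X z i) zs j - Xbar i = (\<Sum>t<2^j. Y (zs ! t) i) / 2^j"
  unfolding lvl_def Y_def by (simp add: sum_subtractf field_simps)

lemma var_bound: assumes n: "2^j \<le> n"
  shows "TE n s0 (\<lambda>zs. nsq I (\<lambda>i. lvl (\<lambda>z. X z i) zs j - Xbar i)) \<le> 32 * B2 * real \<tau> / 2^j"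
proof -
  define N :: nat where "N = 2^j"
  have Npos: "(0::real) < N" unfolding N_def by simp
  have eq: "nsq I (\<lambda>i. lvl (\<lambda>z. X z i) zs j - Xbar i) =
      (1 / (real N)\<^sup>2) * (\<Sum>t<N. \<Sum>u<N. \<Sum>i\<in>I. Y (zs ! t) i * Y (zs ! u) i)" for zs
  proof -
    have "nsq I (\<lambda>i. lvl (\<lambda>z. X z i) zs j - Xbar i) = (\<Sum>i\<in>I. ((\<Sum>t<N. Y (zs ! t) i) / N)\<^sup>2)"
      unfolding nsq_def lvl_Y N_def by simp
    also have "\<dots> = (\<Sum>i\<in>I. (1 / (real N)\<^sup>2) * (\<Sum>t<N. \<Sum>u<N. Y (zs ! t) i * Y (zs ! u) i))"
    proof (intro sum.cong refl)
      fix i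
      show "((\<Sum>t<N. Y (zs ! t) i) / N)\<^sup>2 = (1 / (real N)\<^sup>2) * (\<Sum>t<N. \<Sum>u<N. Y (zs ! t) i * Y (zs ! u) i)"
      proof -
        have sp: "(\<Sum>t<N. Y (zs ! t) i) * (\<Sum>t<N. Y (zs ! t) i) = (\<Sum>t<N. \<Sum>u<N. Y (zs ! t) i * Y (zs ! u) i)"
          by (rule sum_product)
        show ?thesis by (simp add: power_divide power2_eq_square sp)
      qed
    qed
    also have "\<dots> = (1 / (real N)\<^sup>2) * (\<Sum>i\<in>I. \<Sum>t<N. \<Sum>u<N. Y (zs ! t) i * Y (zs ! u) i)"
      by (rule sum_distrib_left[symmetric])
    also have "(\<Sum>i\<in>I. \<Sum>t<N. \<Sum>u<N. Y (zs ! t) i * Y (zs ! u) i) = (\<Sum>t<N. \<Sum>i\<in>I. \<Sum>u<N. Y (zs ! t) i * Y (zs ! u) i)"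
      by (rule sum.swap)
    also have "\<dots> = (\<Sum>t<N. \<Sum>u<N. \<Sum>i\<in>I. Y (zs ! t) i * Y (zs ! u) i)"
      by (rule sum.cong[OF refl], rule sum.swap)
    finally show ?thesis .
  qed
  have "TE n s0 (\<lambda>zs. nsq I (\<lambda>i. lvl (\<lambda>z. X z i) zs j - Xbar i)) =
      (1 / (real N)\<^sup>2) * (\<Sum>t<N. \<Sum>u<N. cov n t u)"
    by (simp only: eq TE_scale TE_sum)
  also have "\<dots> \<le> (1 / (real N)\<^sup>2) * (\<Sum>t<N. \<Sum>u<N. 8 * B2 * (1/2) ^ (ndist t u div \<tau>))"
  proof (intro mult_left_mono sum_mono)
    fix t u assume "t \<in> {..<N}" "u \<in> {..<N}"
    then have "t < n" "u < n" using n unfolding N_def by auto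
    then have "\<bar>cov n t u\<bar> \<le> 8 * B2 * (1/2) ^ (ndist t u div \<tau>)" by (rule cov_all)
    then show "cov n t u \<le> 8 * B2 * (1/2) ^ (ndist t u div \<tau>)" by (rule abs_le_D1)
  qed simp
  also have "\<dots> \<le> (1 / (real N)\<^sup>2) * (\<Sum>t<N. 2 * (\<Sum>k<N. 8 * B2 * (1/2) ^ (k div \<tau>)))"
    by (intro mult_left_mono sum_mono sum_ndist) (use B2_nonneg in auto)
  also have "\<dots> = (1 / (real N)\<^sup>2) * (N * (16 * B2) * (\<Sum>k<N. (1/2) ^ (k div \<tau>)))"
    by (simp add: sum_distrib_left[symmetric])
  also have "\<dots> \<le> (1 / (real N)\<^sup>2) * (N * (16 * B2) * (2 * real \<tau>))"
    using B2_nonneg by (intro mult_left_mono sum_div_geom tau1) auto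
  also have "\<dots> = 32 * B2 * real \<tau> / N" using Npos by (simp add: power2_eq_square field_simps)
  finally show ?thesis unfolding N_def by simp
qed

definition "Lf j i = (\<Sum>t<2^j. \<Sum>u\<in>S. mp t s0 u * H u i) / 2^j"

lemma TE_lvl: assumes n: "2^j \<le> n"
  shows "TE n s0 (\<lambda>zs. lvl (\<lambda>z. X z i) zs j) = Lf j i"
proof -
  have "TE n s0 (\<lambda>zs. lvl (\<lambda>z. X z i) zs j) = TE n s0 (\<lambda>zs. (1 / 2^j) * (\<Sum>t<2^j. X (zs ! t) i))"
    unfolding lvl_def by simp
  also have "\<dots> = (1 / 2^j) * (\<Sum>t<2^j. TE n s0 (\<lambda>zs. X (zs ! t) i))" by (simp only: TE_scale TE_sum)
  also have "\<dots> = (1 / 2^j) * (\<Sum>t<2^j. \<Sum>u\<in>S. mp t s0 u * H u i)"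
  proof (intro arg_cong2[where f="(*)"] sum.cong refl)
    fix t :: nat assume "t \<in> {..<2^j}"
    then have tn: "t < n" using n by simp
    show "TE n s0 (\<lambda>zs. X (zs ! t) i) = (\<Sum>u\<in>S. mp t s0 u * H u i)"
      unfolding H_def by (rule TE_marg[OF s0 tn])
  qed
  finally show ?thesis unfolding Lf_def by simp
qed

lemma bias_bound: "nsq I (\<lambda>i. Lf j i - Xbar i) \<le> 8 * B2 * real \<tau> / 2^j"
proof -
  define N :: nat where "N = 2^j"
  have Npos: "(0::real) < N" unfolding N_def by simp
  define E where "E t i = (\<Sum>u\<in>S. (mp t s0 u - d u) * H u i)" for t i
  have eq: "Lf j i - Xbar i = (\<Sum>t<N. (1 / N) * E t i)" for i
  proof -
    have E_eq: "E t i = (\<Sum>u\<in>S. mp t s0 u * H u i) - Xbar i" for t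
      unfolding E_def Xbar_eq by (simp add: left_diff_distrib sum_subtractf del: mpow.simps)
    have "(\<Sum>t<N. (1 / N) * E t i) = (1 / N) * ((\<Sum>t<N. \<Sum>u\<in>S. mp t s0 u * H u i) - N * Xbar i)"
      by (simp add: E_eq sum_divide_distrib[symmetric] sum_subtractf del: mpow.simps)
    also have "\<dots> = Lf j i - Xbar i" unfolding Lf_def N_def by (simp add: field_simps del: mpow.simps)
    finally show ?thesis by simp
  qed
  have "nsq I (\<lambda>i. Lf j i - Xbar i) = nsq I (\<lambda>i. \<Sum>t<N. (1 / N) * E t i)" by (simp only: eq)
  also have "\<dots> \<le> (\<Sum>t<N. \<bar>1 / real N\<bar>) * (\<Sum>t<N. \<bar>1 / real N\<bar> * nsq I (E t))" by (rule nsq_wsum)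
  also have "\<dots> = (1 / N) * (\<Sum>t<N. nsq I (E t))" using Npos by (simp add: sum_divide_distrib)
  also have "\<dots> \<le> (1 / N) * (\<Sum>t<N. 2 * B2 * err t s0)"
  proof (intro mult_left_mono sum_mono)
    fix t
    have "nsq I (E t) \<le> (err t s0)\<^sup>2 * B2" unfolding E_def by (rule wdiff_bound[OF s0])
    also have "\<dots> \<le> (2 * err t s0) * B2"
      using err_le2[OF s0, of t] err_nonneg[of t s0] B2_nonneg
      by (intro mult_right_mono) (auto simp: power2_eq_square intro: mult_right_mono)
    finally show "nsq I (E t) \<le> 2 * B2 * err t s0" by (simp add: mult_ac)
  qed (use Npos in simp)
  also have "\<dots> = (1 / N) * (2 * B2 * (\<Sum>t<N. err t s0))" by (simp add: sum_distrib_left)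
  also have "\<dots> \<le> (1 / N) * (2 * B2 * (4 * real \<tau>))"
    using B2_nonneg Npos by (intro mult_left_mono sum_err s0) auto
  also have "\<dots> = 8 * B2 * real \<tau> / N" by simp
  finally show ?thesis unfolding N_def by simp
qed

end

lemma half_pow: "(1/2::real)^n * 2^n = 1"
  by (induction n) auto

context mlvec begin

lemma TE_if: "TE n s (\<lambda>zs. if c then F zs else 0) = (if c then TE n s F else 0)"
  by (cases c) (simp_all add: TE_zero)

lemma mlmc_split: "mlmc (\<lambda>z. X z i) T q zs =
    lvl (\<lambda>z. X z i) zs 0 + (if 2^q \<le> T then 2^q * (lvl (\<lambda>z. X z i) zs q - lvl (\<lambda>z. X z i) zs (q - 1)) else 0)"
  unfolding mlmc_def by simp

lemma J_exists: assumes "T \<ge> (1::nat)" shows "\<exists>J. 2^J \<le> T \<and> T < 2^Suc J"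
  using ex_power_ivl1[of 2 T] assms by auto

lemma pow_le_iff_J: assumes J: "2^J \<le> T" "T < 2^Suc J" shows "(2::nat)^q \<le> T \<longleftrightarrow> q \<le> J"
proof
  assume qT: "2^q \<le> T"
  show "q \<le> J"
  proof (rule ccontr)
    assume "\<not> q \<le> J"
    then have "Suc J \<le> q" by simp
    then have "(2::nat)^Suc J \<le> 2^q" by (rule power_increasing) simp
    then show False using J(2) qT by linarith
  qed
next
  assume "q \<le> J"
  then have "(2::nat)^q \<le> 2^J" by (simp add: power_increasing)
  then show "2^q \<le> T" using J(1) by (rule order_trans)
qed

lemma mean_mlmc:
  assumes J: "2^J \<le> T" "T < 2^Suc J"
  shows "mlmc_exp S Act P \<pi> s0 (\<lambda>q zs. mlmc (\<lambda>z. X z i) T q zs) = Lf J i"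
proof -
  have trm: "(1/2)^(Suc k) * TE (2^Suc k) s0 (mlmc (\<lambda>z. X z i) T (Suc k)) =
      (1/2)^(Suc k) * Lf 0 i + (if k \<in> {..<J} then Lf (Suc k) i - Lf k i else 0)" for k
  proof -
    have "TE (2^Suc k) s0 (mlmc (\<lambda>z. X z i) T (Suc k)) =
        Lf 0 i + (if 2^Suc k \<le> T then 2^Suc k * (Lf (Suc k) i - Lf k i) else 0)"
      unfolding mlmc_split
      by (simp only: TE_add TE_if TE_scale TE_diff TE_lvl) (simp add: TE_lvl power_increasing del: power_Suc)
    moreover have "(2::nat)^Suc k \<le> T \<longleftrightarrow> k \<in> {..<J}" using pow_le_iff_J[OF J, of "Suc k"] by auto
    ultimately show ?thesis
      by (cases "k < J") (simp_all add: distrib_left mult.assoc[symmetric] half_pow del: power_Suc)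
  qed
  have s1: "(\<lambda>k. (1/2)^(Suc k) * Lf 0 i) sums (1 * Lf 0 i)"
    using sums_mult2[OF power_half_series, of "Lf 0 i"] by simp
  have s2: "(\<lambda>k. if k \<in> {..<J} then Lf (Suc k) i - Lf k i else 0) sums (\<Sum>k\<in>{..<J}. Lf (Suc k) i - Lf k i)"
    by (rule sums_If_finite_set) simp
  have "(\<lambda>k. (1/2)^(Suc k) * TE (2^Suc k) s0 (mlmc (\<lambda>z. X z i) T (Suc k))) sums
      (1 * Lf 0 i + (\<Sum>k\<in>{..<J}. Lf (Suc k) i - Lf k i))"
    unfolding trm by (rule sums_add[OF s1 s2])
  also have "1 * Lf 0 i + (\<Sum>k\<in>{..<J}. Lf (Suc k) i - Lf k i) = Lf J i"
    using sum_lessThan_telescope[of "\<lambda>k. Lf k i" J] by simp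
  finally show ?thesis unfolding mlmc_exp_def by (rule sums_unique[symmetric])
qed

theorem part_A:
  assumes T: "T \<ge> 2"
  shows "nsq I (\<lambda>i. mlmc_exp S Act P \<pi> s0 (\<lambda>q zs. mlmc (\<lambda>z. X z i) T q zs) - Xbar i) \<le> 16 * B2 * real \<tau> / real T"
proof -
  obtain J where J: "2^J \<le> T" "T < 2^Suc J" using J_exists[of T] T by auto
  have "nsq I (\<lambda>i. mlmc_exp S Act P \<pi> s0 (\<lambda>q zs. mlmc (\<lambda>z. X z i) T q zs) - Xbar i) = nsq I (\<lambda>i. Lf J i - Xbar i)"
    by (simp add: mean_mlmc[OF J])
  also have "\<dots> \<le> 8 * B2 * real \<tau> / 2^J" by (rule bias_bound)
  also have "\<dots> \<le> 16 * B2 * real \<tau> / real T"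
  proof -
    have "real T < 2 * 2^J" using J(2) by (metis of_nat_less_iff of_nat_numeral of_nat_power power_Suc)
    then have "real T \<le> 2 * 2^J" by simp
    then have "1 / (2^J) \<le> 2 / real T" using T by (simp add: field_simps)
    moreover have "0 \<le> 8 * B2 * real \<tau>" using B2_nonneg by simp
    ultimately have "8 * B2 * real \<tau> * (1 / 2^J) \<le> 8 * B2 * real \<tau> * (2 / real T)" by (rule mult_left_mono)
    then show ?thesis by simp
  qed
  finally show ?thesis .
qed

lemma ln2_half: "1/2 \<le> ln (2::real)"
proof -
  have "ln (1/2::real) \<le> 1/2 - 1" by (rule ln_le_minus_one) simp
  then show ?thesis by (simp add: ln_div)
qed

theorem part_C:
  assumes T: "T \<ge> 2"
    and \<Phi>: "\<And>q zs. 0 \<le> \<Phi> q zs \<and> \<Phi> q zs \<le> nsq I (\<lambda>i. mlmc (\<lambda>z. X z i) T q zs - Xbar i)"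
  shows "mlmc_exp S Act P \<pi> s0 \<Phi> \<le> 784 * B2 * real \<tau> * ln (real T)"
proof -
  obtain J where J: "2^J \<le> T" "T < 2^Suc J" using J_exists[of T] T by auto
  define f where "f k = (1/2::real)^(Suc k) * TE (2^Suc k) s0 (\<Phi> (Suc k))" for k
  define g where "g k = (1/2::real)^(Suc k) * (8 * B2) + (if k \<in> {..<J} then 384 * B2 * real \<tau> else 0)" for k
  have f_nonneg: "0 \<le> f k" for k
  proof -
    have "TE (2^Suc k) s0 (\<lambda>_. 0) \<le> TE (2^Suc k) s0 (\<Phi> (Suc k))" by (rule TE_mono[OF s0]) (use \<Phi> in auto)
    then show ?thesis unfolding f_def by (simp add: TE_zero)
  qed
  have fg: "f k \<le> g k" for k
  proof -
    let ?q = "Suc k"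
    let ?c = "if 2^?q \<le> T then (2::real)^?q else 0"
    let ?L = "\<lambda>j zs. nsq I (\<lambda>i. lvl (\<lambda>z. X z i) zs j - Xbar i)"
    have pw: "\<Phi> ?q zs \<le> 2 * ?L 0 zs + 4 * ?c\<^sup>2 * (?L ?q zs + ?L k zs)" for zs
    proof -
      have eq: "(\<lambda>i. mlmc (\<lambda>z. X z i) T ?q zs - Xbar i) =
          (\<lambda>i. (lvl (\<lambda>z. X z i) zs 0 - Xbar i) + ?c * ((lvl (\<lambda>z. X z i) zs ?q - Xbar i) - (lvl (\<lambda>z. X z i) zs k - Xbar i)))"
        by (auto simp: mlmc_def algebra_simps)
      have "\<Phi> ?q zs \<le> nsq I (\<lambda>i. mlmc (\<lambda>z. X z i) T ?q zs - Xbar i)" using \<Phi> by blast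
      also have "\<dots> \<le> 2 * ?L 0 zs + 2 * nsq I (\<lambda>i. ?c * ((lvl (\<lambda>z. X z i) zs ?q - Xbar i) - (lvl (\<lambda>z. X z i) zs k - Xbar i)))"
        unfolding eq by (rule nsq_add_le)
      also have "nsq I (\<lambda>i. ?c * ((lvl (\<lambda>z. X z i) zs ?q - Xbar i) - (lvl (\<lambda>z. X z i) zs k - Xbar i)))
          = ?c\<^sup>2 * nsq I (\<lambda>i. (lvl (\<lambda>z. X z i) zs ?q - Xbar i) - (lvl (\<lambda>z. X z i) zs k - Xbar i))"
        by (rule nsq_scale)
      also have "\<dots> \<le> ?c\<^sup>2 * (2 * ?L ?q zs + 2 * ?L k zs)"
        by (intro mult_left_mono nsq_diff_le) simp
      finally show ?thesis by (simp add: algebra_simps)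
    qed
    have L0: "TE (2^?q) s0 (?L 0) \<le> 4 * B2"
    proof -
      have "TE (2^?q) s0 (?L 0) \<le> TE (2^?q) s0 (\<lambda>_. 4 * B2)"
      proof (rule TE_mono[OF s0])
        fix zs :: "trans list" assume len: "length zs = 2^?q" and v: "set zs \<subseteq> S \<times> Act \<times> S"
        have "zs ! 0 \<in> set zs" using len by (intro nth_mem) simp
        then have "zs ! 0 \<in> S \<times> Act \<times> S" using v by blast
        moreover have "?L 0 zs = nsq I (Y (zs ! 0))" unfolding lvl_Y by simp
        ultimately show "?L 0 zs \<le> 4 * B2" using Y_bound by simp
      qed
      then show ?thesis by (simp add: TE_const[OF s0])
    qed
    have Lq: "TE (2^?q) s0 (?L ?q) \<le> 32 * B2 * real \<tau> / 2^?q" by (rule var_bound) simp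
    have Lk: "TE (2^?q) s0 (?L k) \<le> 32 * B2 * real \<tau> / 2^k" by (rule var_bound) (simp add: power_increasing)
    have "TE (2^?q) s0 (\<Phi> ?q) \<le> TE (2^?q) s0 (\<lambda>zs. 2 * ?L 0 zs + 4 * ?c\<^sup>2 * (?L ?q zs + ?L k zs))"
      by (rule TE_mono[OF s0]) (rule pw)
    also have "\<dots> = 2 * TE (2^?q) s0 (?L 0) + 4 * ?c\<^sup>2 * (TE (2^?q) s0 (?L ?q) + TE (2^?q) s0 (?L k))"
      by (simp only: TE_add TE_scale)
    also have "\<dots> \<le> 2 * (4 * B2) + 4 * ?c\<^sup>2 * (32 * B2 * real \<tau> / 2^?q + 32 * B2 * real \<tau> / 2^k)"
      using L0 Lq Lk by (intro add_mono mult_left_mono) auto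
    finally have bnd: "TE (2^?q) s0 (\<Phi> ?q) \<le> 8 * B2 + 4 * ?c\<^sup>2 * (96 * B2 * real \<tau> / 2^?q)"
      by (simp add: field_simps)
    have "f k \<le> (1/2)^?q * (8 * B2 + 4 * ?c\<^sup>2 * (96 * B2 * real \<tau> / 2^?q))"
      unfolding f_def by (rule mult_left_mono[OF bnd]) simp
    also have "\<dots> = g k"
    proof -
      have iff: "(2::nat)^?q \<le> T \<longleftrightarrow> k \<in> {..<J}" using pow_le_iff_J[OF J, of ?q] by auto
      show ?thesis
      proof (cases "k \<in> {..<J}")
        case True
        then have "(2::nat)^?q \<le> T" using iff by simp
        then have c: "?c = 2^?q" by simp
        show ?thesis unfolding g_def c using True
          by (simp add: power2_eq_square field_simps del: power_Suc)
      next
        case False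
        then have "\<not> (2::nat)^?q \<le> T" using iff by simp
        then show ?thesis unfolding g_def using False by simp
      qed
    qed
    finally show ?thesis .
  qed
  have s1: "(\<lambda>k. (1/2::real)^(Suc k) * (8 * B2)) sums (1 * (8 * B2))"
    using sums_mult2[OF power_half_series, of "8 * B2"] by simp
  have s2: "(\<lambda>k. if k \<in> {..<J} then 384 * B2 * real \<tau> else 0) sums (\<Sum>k\<in>{..<J}. 384 * B2 * real \<tau>)"
    by (rule sums_If_finite_set) simp
  have gs: "g sums (8 * B2 + real J * (384 * B2 * real \<tau>))"
    unfolding g_def using sums_add[OF s1 s2] by simp
  have sf: "summable f"
    by (rule summable_comparison_test'[where g=g and N=0]) (use gs fg f_nonneg in \<open>auto simp: sums_iff\<close>)
  have "mlmc_exp S Act P \<pi> s0 \<Phi> = suminf f" unfolding mlmc_exp_def f_def by simp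
  also have "\<dots> \<le> suminf g" by (rule suminf_le[OF fg sf]) (use gs in \<open>simp add: sums_iff\<close>)
  also have "\<dots> = 8 * B2 + real J * (384 * B2 * real \<tau>)" using gs by (simp add: sums_iff)
  also have "\<dots> \<le> 784 * B2 * real \<tau> * ln (real T)"
  proof -
    have lnT: "real J * ln 2 \<le> ln (real T)"
    proof -
      have "(2::real)^J \<le> real T" using J(1) by (metis of_nat_le_iff of_nat_numeral of_nat_power)
      then have "ln ((2::real) ^ J) \<le> ln (real T)" using T by (subst ln_le_cancel_iff) auto
      then show ?thesis by (simp add: ln_realpow)
    qed
    have J2: "real J \<le> 2 * ln (real T)"
    proof -
      have "real J * (1/2) \<le> real J * ln 2" using ln2_half by (intro mult_left_mono) auto
      then show ?thesis using lnT by simp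
    qed
    have one: "1 \<le> 2 * ln (real T)"
    proof -
      have "ln 2 \<le> ln (real T)" using T by simp
      then show ?thesis using ln2_half by simp
    qed
    have B: "0 \<le> B2" by (rule B2_nonneg)
    have t1: "1 \<le> real \<tau>" using tau1 by simp
    have "1 * 1 \<le> (2 * ln (real T)) * real \<tau>" by (rule mult_mono) (use one t1 in auto)
    then have a: "8 * B2 * 1 \<le> 8 * B2 * ((2 * ln (real T)) * real \<tau>)" by (intro mult_left_mono) (use B in auto)
    have b: "real J * (384 * B2 * real \<tau>) \<le> (2 * ln (real T)) * (384 * B2 * real \<tau>)"
      using J2 B t1 by (intro mult_right_mono) auto
    have "8 * B2 + real J * (384 * B2 * real \<tau>) \<le> 8 * B2 * ((2 * ln (real T)) * real \<tau>) + (2 * ln (real T)) * (384 * B2 * real \<tau>)"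
      using a b by linarith
    also have "\<dots> = 784 * B2 * real \<tau> * ln (real T)" by (simp add: algebra_simps)
    finally show ?thesis .
  qed
  finally show ?thesis .
qed

end

lemma vnorm_sq: "(vnorm n v)\<^sup>2 = nsq {..<n} v"
  unfolding vnorm_def nsq_def by (simp add: sum_nonneg)

lemma opnorm_sq:
  fixes M :: "nat \<Rightarrow> nat \<Rightarrow> real"
  shows "(opnorm n M)\<^sup>2 \<le> nsq ({..<n} \<times> {..<n}) (\<lambda>p. M (fst p) (snd p))"
proof -
  define F where "F = nsq ({..<n} \<times> {..<n}) (\<lambda>p. M (fst p) (snd p))"
  have F: "F = (\<Sum>i<n. \<Sum>j<n. (M i j)\<^sup>2)" unfolding F_def nsq_def by (simp add: sum.cartesian_product split_def)
  have F0: "0 \<le> F" unfolding F_def by (rule nsq_nonneg)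
  define A where "A = {vnorm n (\<lambda>i. \<Sum>j<n. M i j * x j) | x. vnorm n x \<le> 1}"
  have le: "a \<le> sqrt F" if "a \<in> A" for a
  proof -
    obtain x where a: "a = vnorm n (\<lambda>i. \<Sum>j<n. M i j * x j)" and x: "vnorm n x \<le> 1" using \<open>a \<in> A\<close> unfolding A_def by auto
    have x2: "(\<Sum>j<n. (x j)\<^sup>2) \<le> 1" using x unfolding vnorm_def by simp
    have "(\<Sum>i<n. (\<Sum>j<n. M i j * x j)\<^sup>2) \<le> (\<Sum>i<n. (\<Sum>j<n. (M i j)\<^sup>2) * (\<Sum>j<n. (x j)\<^sup>2))"
      by (intro sum_mono CS)
    also have "\<dots> \<le> (\<Sum>i<n. (\<Sum>j<n. (M i j)\<^sup>2) * 1)"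
      by (intro sum_mono mult_left_mono x2) (simp add: sum_nonneg)
    also have "\<dots> = F" unfolding F by simp
    finally show ?thesis unfolding a vnorm_def by (simp add: real_sqrt_le_mono)
  qed
  have ne: "A \<noteq> {}" unfolding A_def by (auto intro!: exI[of _ "\<lambda>_. 0"] simp: vnorm_def)
  have "opnorm n M = Sup A" unfolding opnorm_def A_def by simp
  also have "\<dots> \<le> sqrt F" by (rule cSup_least[OF ne le])
  finally have up: "opnorm n M \<le> sqrt F" .
  have "0 \<in> A" unfolding A_def by (auto intro!: exI[of _ "\<lambda>_. 0"] simp: vnorm_def)
  then have "0 \<le> Sup A" by (intro cSup_upper) (auto intro: bdd_aboveI[where M="sqrt F"] le)
  then have "0 \<le> opnorm n M" unfolding opnorm_def A_def by simp
  then have "(opnorm n M)\<^sup>2 \<le> (sqrt F)\<^sup>2" using up by (intro power_mono) auto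
  then show ?thesis using F0 unfolding F_def by simp
qed

lemma sum_lessThan_Suc_shift': "(\<Sum>i<Suc m. f i) = f 0 + (\<Sum>i<m. f (Suc i))"
  by (rule sum.lessThan_Suc_shift)

lemma Amat_bound:
  fixes \<phi> :: "nat \<Rightarrow> nat \<Rightarrow> real"
  assumes cg: "c\<gamma> \<ge> 1" and ps: "(\<Sum>i<m. (\<phi> s i)\<^sup>2) \<le> 1" and ps': "(\<Sum>i<m. (\<phi> s' i)\<^sup>2) \<le> 1"
  shows "nsq ({..<m+1} \<times> {..<m+1}) (\<lambda>p. Amat c\<gamma> \<phi> (s, a, s') (fst p) (snd p)) \<le> 6 * c\<gamma>\<^sup>2"
proof -
  define D where "D = (\<Sum>j<m. (\<phi> s j - \<phi> s' j)\<^sup>2)"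
  have D: "D \<le> 4"
  proof -
    have "D \<le> 2 * nsq {..<m} (\<phi> s) + 2 * nsq {..<m} (\<phi> s')" unfolding D_def
      using nsq_diff_le[of "{..<m}" "\<phi> s" "\<phi> s'"] by (simp add: nsq_def)
    then show ?thesis using ps ps' unfolding nsq_def by simp
  qed
  have D0: "0 \<le> D" unfolding D_def by (simp add: sum_nonneg)
  have row0: "(\<Sum>j<Suc m. (Amat c\<gamma> \<phi> (s, a, s') 0 j)\<^sup>2) = c\<gamma>\<^sup>2"
    unfolding Amat_def by (simp add: sum.lessThan_Suc_shift del: sum.lessThan_Suc)
  have rowi: "(\<Sum>j<Suc m. (Amat c\<gamma> \<phi> (s, a, s') (Suc i) j)\<^sup>2) = (\<phi> s i)\<^sup>2 * (1 + D)" for i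
    unfolding Amat_def D_def
    by (simp add: sum.lessThan_Suc_shift power_mult_distrib sum_distrib_left distrib_left del: sum.lessThan_Suc)
  have "nsq ({..<m+1} \<times> {..<m+1}) (\<lambda>p. Amat c\<gamma> \<phi> (s, a, s') (fst p) (snd p))
      = (\<Sum>i<Suc m. \<Sum>j<Suc m. (Amat c\<gamma> \<phi> (s, a, s') i j)\<^sup>2)"
    unfolding nsq_def by (subst sum.cartesian_product) (simp add: split_def del: sum.lessThan_Suc)
  also have "\<dots> = (\<Sum>j<Suc m. (Amat c\<gamma> \<phi> (s, a, s') 0 j)\<^sup>2) + (\<Sum>i<m. \<Sum>j<Suc m. (Amat c\<gamma> \<phi> (s, a, s') (Suc i) j)\<^sup>2)"
    by (rule sum.lessThan_Suc_shift)
  also have "\<dots> = c\<gamma>\<^sup>2 + (\<Sum>i<m. (\<phi> s i)\<^sup>2 * (1 + D))"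
    by (simp only: row0 rowi)
  also have "\<dots> = c\<gamma>\<^sup>2 + (\<Sum>i<m. (\<phi> s i)\<^sup>2) * (1 + D)" by (simp add: sum_distrib_right)
  also have "\<dots> \<le> c\<gamma>\<^sup>2 + 1 * 5"
    using ps D D0 by (intro add_left_mono mult_mono) (auto simp: sum_nonneg)
  also have "\<dots> \<le> 6 * c\<gamma>\<^sup>2"
  proof -
    have "1 \<le> c\<gamma>\<^sup>2" using cg by (metis one_le_power)
    then show ?thesis by simp
  qed
  finally show ?thesis .
qed

lemma bvec_bound:
  fixes \<phi> g :: "nat \<Rightarrow> nat \<Rightarrow> real"
  assumes cg: "c\<gamma> \<ge> 1" and ps: "(\<Sum>i<m. (\<phi> s i)\<^sup>2) \<le> 1" and gb: "\<bar>g s a\<bar> \<le> 1"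
  shows "nsq {..<m+1} (\<lambda>i. bvec c\<gamma> \<phi> g (s, a, s') i) \<le> 2 * c\<gamma>\<^sup>2"
proof -
  have g2: "(g s a)\<^sup>2 \<le> 1"
  proof -
    have "(g s a)\<^sup>2 = \<bar>g s a\<bar>\<^sup>2" by simp
    also have "\<dots> \<le> 1\<^sup>2" by (rule power_mono) (use gb in auto)
    finally show ?thesis by simp
  qed
  have "nsq {..<m+1} (\<lambda>i. bvec c\<gamma> \<phi> g (s, a, s') i) = (g s a)\<^sup>2 * (c\<gamma>\<^sup>2 + (\<Sum>i<m. (\<phi> s i)\<^sup>2))"
    unfolding nsq_def bvec_def
    by (simp add: sum.lessThan_Suc_shift power_mult_distrib sum_distrib_left algebra_simps del: sum.lessThan_Suc)
  also have "\<dots> \<le> 1 * (c\<gamma>\<^sup>2 + 1)"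
  proof (rule mult_mono)
    show "0 \<le> c\<gamma>\<^sup>2 + (\<Sum>i<m. (\<phi> s i)\<^sup>2)" by (intro add_nonneg_nonneg sum_nonneg) auto
  qed (use g2 ps in auto)
  also have "\<dots> \<le> 2 * c\<gamma>\<^sup>2"
  proof -
    have "1 \<le> c\<gamma>\<^sup>2" using cg by (metis one_le_power)
    then show ?thesis by simp
  qed
  finally show ?thesis .
qed

lemma main_bound:
  fixes S Act :: "nat set" and P :: "nat \<Rightarrow> nat \<Rightarrow> nat \<Rightarrow> real"
    and r c :: "nat \<Rightarrow> nat \<Rightarrow> real" and m :: nat and \<phi> :: "nat \<Rightarrow> nat \<Rightarrow> real"
    and Pol :: "(nat \<Rightarrow> nat \<Rightarrow> real) set" and \<pi> g :: "nat \<Rightarrow> nat \<Rightarrow> real"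
    and c\<gamma> :: real and Tmax s0 :: nat
  assumes finS: "finite S" and neS: "S \<noteq> {}" and finA: "finite Act" and neA: "Act \<noteq> {}"
    and ker: "is_kernel S Act P"
    and rc: "\<forall>s\<in>S. \<forall>a\<in>Act. 0 \<le> r s a \<and> r s a \<le> 1 \<and> -1 \<le> c s a \<and> c s a \<le> 1"
    and erg: "\<forall>p. is_policy S Act p \<longrightarrow> irreducible S (Ppi Act P p) \<and> aperiodic S (Ppi Act P p)"
    and polPol: "\<forall>p\<in>Pol. is_policy S Act p"
    and bdd: "bdd_above ((\<lambda>p. real (mix_time S (Ppi Act P p))) ` Pol)"
    and phi: "\<forall>s\<in>S. vnorm m (\<phi> s) \<le> 1"
    and piPol: "\<pi> \<in> Pol" and gg: "g = r \<or> g = c" and cg: "c\<gamma> \<ge> 1" and T: "Tmax \<ge> 2" and s0: "s0 \<in> S"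
  shows "(let \<tau> = Sup ((\<lambda>p. real (mix_time S (Ppi Act P p))) ` Pol);
         Abar = (\<lambda>i j. statE S Act P \<pi> (\<lambda>z. Amat c\<gamma> \<phi> z i j));
         bbar = (\<lambda>i. statE S Act P \<pi> (\<lambda>z. bvec c\<gamma> \<phi> g z i));
         Aq = (\<lambda>q zs i j. mlmc (\<lambda>z. Amat c\<gamma> \<phi> z i j) Tmax q zs);
         bq = (\<lambda>q zs i. mlmc (\<lambda>z. bvec c\<gamma> \<phi> g z i) Tmax q zs)
     in (opnorm (m + 1) (\<lambda>i j. mlmc_exp S Act P \<pi> s0 (\<lambda>q zs. Aq q zs i j) - Abar i j))\<^sup>2
           \<le> 10000 * c\<gamma>\<^sup>2 * \<tau> / real Tmax
      \<and> (vnorm (m + 1) (\<lambda>i. mlmc_exp S Act P \<pi> s0 (\<lambda>q zs. bq q zs i) - bbar i))\<^sup>2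
           \<le> 10000 * c\<gamma>\<^sup>2 * \<tau> / real Tmax
      \<and> mlmc_exp S Act P \<pi> s0 (\<lambda>q zs. (opnorm (m + 1) (\<lambda>i j. Aq q zs i j - Abar i j))\<^sup>2)
           \<le> 10000 * c\<gamma>\<^sup>2 * \<tau> * ln (real Tmax)
      \<and> mlmc_exp S Act P \<pi> s0 (\<lambda>q zs. (vnorm (m + 1) (\<lambda>i. bq q zs i - bbar i))\<^sup>2)
           \<le> 10000 * c\<gamma>\<^sup>2 * \<tau> * ln (real Tmax))"
proof -
  have pol\<pi>: "is_policy S Act \<pi>" using polPol piPol by auto
  interpret mc S Act P \<pi> using finS finA ker pol\<pi> by unfold_locales
  have irr: "irreducible S K" and ap: "aperiodic S K" using erg pol\<pi> by auto
  have E: "stationary S K (stat_dist S K) \<and> mix_time S K \<ge> 1 \<and>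
      (\<forall>s\<in>S. l1 S (\<lambda>y. mp (mix_time S K) s y - stat_dist S K y) \<le> 1/2)"
    by (rule ergodic[OF irr ap neS])
  define \<tau>0 where "\<tau>0 = mix_time S K"
  interpret mcmix S Act P \<pi> \<tau>0 using E unfolding \<tau>0_def by unfold_locales auto
  define \<tau> where "\<tau> = Sup ((\<lambda>p. real (mix_time S (Ppi Act P p))) ` Pol)"
  have tle: "real \<tau>0 \<le> \<tau>" unfolding \<tau>_def \<tau>0_def by (rule cSup_upper) (use piPol bdd in auto)
  have t0: "0 \<le> real \<tau>0" by simp
  have phib: "(\<Sum>i<m. (\<phi> s i)\<^sup>2) \<le> 1" if "s \<in> S" for s
    using phi that unfolding vnorm_def by auto
  have gb: "\<bar>g s a\<bar> \<le> 1" if "s \<in> S" "a \<in> Act" for s a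
    using rc gg that by (force simp: abs_le_iff)
  interpret A: mlvec S Act P \<pi> \<tau>0 "\<lambda>z p. Amat c\<gamma> \<phi> z (fst p) (snd p)" "{..<m+1} \<times> {..<m+1}" "6 * c\<gamma>\<^sup>2" s0
  proof unfold_locales
    fix z assume "z \<in> S \<times> Act \<times> S"
    then obtain s a s' where z: "z = (s, a, s')" "s \<in> S" "s' \<in> S" by auto
    show "nsq ({..<m+1} \<times> {..<m+1}) (\<lambda>p. Amat c\<gamma> \<phi> z (fst p) (snd p)) \<le> 6 * c\<gamma>\<^sup>2"
      unfolding z(1) by (rule Amat_bound[OF cg phib[OF z(2)] phib[OF z(3)]])
  qed (use s0 in auto)
  interpret B: mlvec S Act P \<pi> \<tau>0 "\<lambda>z i. bvec c\<gamma> \<phi> g z i" "{..<m+1}" "2 * c\<gamma>\<^sup>2" s0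
  proof unfold_locales
    fix z assume "z \<in> S \<times> Act \<times> S"
    then obtain s a s' where z: "z = (s, a, s')" "s \<in> S" "a \<in> Act" by auto
    show "nsq {..<m+1} (\<lambda>i. bvec c\<gamma> \<phi> g z i) \<le> 2 * c\<gamma>\<^sup>2"
      unfolding z(1) by (rule bvec_bound[where g=g and s=s and a=a and \<phi>=\<phi> and m=m and c\<gamma>=c\<gamma>, OF cg phib[OF z(2)] gb[OF z(2) z(3)]])
  qed (use s0 in auto)
  have Tpos: "0 < real Tmax" using T by simp
  have lnT: "0 \<le> ln (real Tmax)" using T by simp
  have cg2: "0 \<le> c\<gamma>\<^sup>2" by simp
  have finA_: "k * c\<gamma>\<^sup>2 * real \<tau>0 / real Tmax \<le> 10000 * c\<gamma>\<^sup>2 * \<tau> / real Tmax" if "0 \<le> k" "k \<le> 10000" for k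
  proof -
    have "k * c\<gamma>\<^sup>2 * real \<tau>0 \<le> 10000 * c\<gamma>\<^sup>2 * \<tau>"
      using that tle t0 cg2 by (intro mult_mono) auto
    then show ?thesis using Tpos by (intro divide_right_mono) auto
  qed
  have finC_: "k * c\<gamma>\<^sup>2 * real \<tau>0 * ln (real Tmax) \<le> 10000 * c\<gamma>\<^sup>2 * \<tau> * ln (real Tmax)" if "0 \<le> k" "k \<le> 10000" for k
  proof -
    have "k * c\<gamma>\<^sup>2 * real \<tau>0 \<le> 10000 * c\<gamma>\<^sup>2 * \<tau>"
      using that tle t0 cg2 by (intro mult_mono) auto
    then show ?thesis using lnT by (intro mult_right_mono) auto
  qed
  have a: "(opnorm (m + 1) (\<lambda>i j. mlmc_exp S Act P \<pi> s0 (\<lambda>q zs. mlmc (\<lambda>z. Amat c\<gamma> \<phi> z i j) Tmax q zs)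
       - statE S Act P \<pi> (\<lambda>z. Amat c\<gamma> \<phi> z i j)))\<^sup>2 \<le> 10000 * c\<gamma>\<^sup>2 * \<tau> / real Tmax"
  proof -
    have "(opnorm (m + 1) (\<lambda>i j. mlmc_exp S Act P \<pi> s0 (\<lambda>q zs. mlmc (\<lambda>z. Amat c\<gamma> \<phi> z i j) Tmax q zs)
       - statE S Act P \<pi> (\<lambda>z. Amat c\<gamma> \<phi> z i j)))\<^sup>2 \<le>
       nsq ({..<m+1} \<times> {..<m+1}) (\<lambda>p. mlmc_exp S Act P \<pi> s0 (\<lambda>q zs. mlmc (\<lambda>z. Amat c\<gamma> \<phi> z (fst p) (snd p)) Tmax q zs)
       - A.Xbar p)"
      unfolding A.Xbar_def by (rule opnorm_sq)
    also have "\<dots> \<le> 16 * (6 * c\<gamma>\<^sup>2) * real \<tau>0 / real Tmax" by (rule A.part_A[OF T])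
    also have "\<dots> = 96 * c\<gamma>\<^sup>2 * real \<tau>0 / real Tmax" by simp
    also have "\<dots> \<le> 10000 * c\<gamma>\<^sup>2 * \<tau> / real Tmax" by (rule finA_) auto
    finally show ?thesis .
  qed
  have b: "(vnorm (m + 1) (\<lambda>i. mlmc_exp S Act P \<pi> s0 (\<lambda>q zs. mlmc (\<lambda>z. bvec c\<gamma> \<phi> g z i) Tmax q zs)
       - statE S Act P \<pi> (\<lambda>z. bvec c\<gamma> \<phi> g z i)))\<^sup>2 \<le> 10000 * c\<gamma>\<^sup>2 * \<tau> / real Tmax"
  proof -
    have "(vnorm (m + 1) (\<lambda>i. mlmc_exp S Act P \<pi> s0 (\<lambda>q zs. mlmc (\<lambda>z. bvec c\<gamma> \<phi> g z i) Tmax q zs)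
       - statE S Act P \<pi> (\<lambda>z. bvec c\<gamma> \<phi> g z i)))\<^sup>2 =
       nsq {..<m+1} (\<lambda>i. mlmc_exp S Act P \<pi> s0 (\<lambda>q zs. mlmc (\<lambda>z. bvec c\<gamma> \<phi> g z i) Tmax q zs) - B.Xbar i)"
      unfolding B.Xbar_def by (rule vnorm_sq)
    also have "\<dots> \<le> 16 * (2 * c\<gamma>\<^sup>2) * real \<tau>0 / real Tmax" by (rule B.part_A[OF T])
    also have "\<dots> = 32 * c\<gamma>\<^sup>2 * real \<tau>0 / real Tmax" by simp
    also have "\<dots> \<le> 10000 * c\<gamma>\<^sup>2 * \<tau> / real Tmax" by (rule finA_) auto
    finally show ?thesis .
  qed
  have c: "mlmc_exp S Act P \<pi> s0 (\<lambda>q zs. (opnorm (m + 1) (\<lambda>i j. mlmc (\<lambda>z. Amat c\<gamma> \<phi> z i j) Tmax q zs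
       - statE S Act P \<pi> (\<lambda>z. Amat c\<gamma> \<phi> z i j)))\<^sup>2) \<le> 10000 * c\<gamma>\<^sup>2 * \<tau> * ln (real Tmax)"
  proof -
    have "mlmc_exp S Act P \<pi> s0 (\<lambda>q zs. (opnorm (m + 1) (\<lambda>i j. mlmc (\<lambda>z. Amat c\<gamma> \<phi> z i j) Tmax q zs
       - statE S Act P \<pi> (\<lambda>z. Amat c\<gamma> \<phi> z i j)))\<^sup>2) \<le> 784 * (6 * c\<gamma>\<^sup>2) * real \<tau>0 * ln (real Tmax)"
    proof (rule A.part_C[OF T])
      fix q zs
      show "0 \<le> (opnorm (m + 1) (\<lambda>i j. mlmc (\<lambda>z. Amat c\<gamma> \<phi> z i j) Tmax q zs
       - statE S Act P \<pi> (\<lambda>z. Amat c\<gamma> \<phi> z i j)))\<^sup>2 \<and>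
        (opnorm (m + 1) (\<lambda>i j. mlmc (\<lambda>z. Amat c\<gamma> \<phi> z i j) Tmax q zs
       - statE S Act P \<pi> (\<lambda>z. Amat c\<gamma> \<phi> z i j)))\<^sup>2 \<le>
        nsq ({..<m+1} \<times> {..<m+1}) (\<lambda>p. mlmc (\<lambda>z. Amat c\<gamma> \<phi> z (fst p) (snd p)) Tmax q zs - A.Xbar p)"
        unfolding A.Xbar_def by (intro conjI zero_le_power2 opnorm_sq)
    qed
    also have "\<dots> = 4704 * c\<gamma>\<^sup>2 * real \<tau>0 * ln (real Tmax)" by simp
    also have "\<dots> \<le> 10000 * c\<gamma>\<^sup>2 * \<tau> * ln (real Tmax)" by (rule finC_) auto
    finally show ?thesis .
  qed
  have d: "mlmc_exp S Act P \<pi> s0 (\<lambda>q zs. (vnorm (m + 1) (\<lambda>i. mlmc (\<lambda>z. bvec c\<gamma> \<phi> g z i) Tmax q zs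
       - statE S Act P \<pi> (\<lambda>z. bvec c\<gamma> \<phi> g z i)))\<^sup>2) \<le> 10000 * c\<gamma>\<^sup>2 * \<tau> * ln (real Tmax)"
  proof -
    have "mlmc_exp S Act P \<pi> s0 (\<lambda>q zs. (vnorm (m + 1) (\<lambda>i. mlmc (\<lambda>z. bvec c\<gamma> \<phi> g z i) Tmax q zs
       - statE S Act P \<pi> (\<lambda>z. bvec c\<gamma> \<phi> g z i)))\<^sup>2) \<le> 784 * (2 * c\<gamma>\<^sup>2) * real \<tau>0 * ln (real Tmax)"
    proof (rule B.part_C[OF T])
      fix q zs
      show "0 \<le> (vnorm (m + 1) (\<lambda>i. mlmc (\<lambda>z. bvec c\<gamma> \<phi> g z i) Tmax q zs
       - statE S Act P \<pi> (\<lambda>z. bvec c\<gamma> \<phi> g z i)))\<^sup>2 \<and>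
        (vnorm (m + 1) (\<lambda>i. mlmc (\<lambda>z. bvec c\<gamma> \<phi> g z i) Tmax q zs
       - statE S Act P \<pi> (\<lambda>z. bvec c\<gamma> \<phi> g z i)))\<^sup>2 \<le>
        nsq {..<m+1} (\<lambda>i. mlmc (\<lambda>z. bvec c\<gamma> \<phi> g z i) Tmax q zs - B.Xbar i)"
        unfolding B.Xbar_def vnorm_sq by (intro conjI nsq_nonneg order_refl)
    qed
    also have "\<dots> = 1568 * c\<gamma>\<^sup>2 * real \<tau>0 * ln (real Tmax)" by simp
    also have "\<dots> \<le> 10000 * c\<gamma>\<^sup>2 * \<tau> * ln (real Tmax)" by (rule finC_) auto
    finally show ?thesis .
  qed
  show ?thesis unfolding Let_def \<tau>_def[symmetric] using a b c d by blast
qed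

theorem lemma6:
  shows "\<exists>C::real. \<forall>(S::nat set) (Act::nat set) (P::nat \<Rightarrow> nat \<Rightarrow> nat \<Rightarrow> real)
      (r::nat \<Rightarrow> nat \<Rightarrow> real) (c::nat \<Rightarrow> nat \<Rightarrow> real) (m::nat) (\<phi>::nat \<Rightarrow> nat \<Rightarrow> real)
      (Pol::(nat \<Rightarrow> nat \<Rightarrow> real) set) (\<pi>::nat \<Rightarrow> nat \<Rightarrow> real) (g::nat \<Rightarrow> nat \<Rightarrow> real)
      (c\<gamma>::real) (Tmax::nat) (s0::nat).
    finite S \<and> S \<noteq> {} \<and> finite Act \<and> Act \<noteq> {} \<and> is_kernel S Act P \<and>
    (\<forall>s\<in>S. \<forall>a\<in>Act. 0 \<le> r s a \<and> r s a \<le> 1 \<and> -1 \<le> c s a \<and> c s a \<le> 1) \<and>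
    (\<forall>p. is_policy S Act p \<longrightarrow>
        irreducible S (Ppi Act P p) \<and> aperiodic S (Ppi Act P p)) \<and>
    (\<forall>p\<in>Pol. is_policy S Act p) \<and>
    bdd_above ((\<lambda>p. real (mix_time S (Ppi Act P p))) ` Pol) \<and>
    (\<forall>s\<in>S. vnorm m (\<phi> s) \<le> 1) \<and>
    \<pi> \<in> Pol \<and> (g = r \<or> g = c) \<and> c\<gamma> \<ge> 1 \<and> Tmax \<ge> 2 \<and> s0 \<in> S
    \<longrightarrow>
    (let \<tau> = Sup ((\<lambda>p. real (mix_time S (Ppi Act P p))) ` Pol);
         Abar = (\<lambda>i j. statE S Act P \<pi> (\<lambda>z. Amat c\<gamma> \<phi> z i j));
         bbar = (\<lambda>i. statE S Act P \<pi> (\<lambda>z. bvec c\<gamma> \<phi> g z i));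
         Aq = (\<lambda>q zs i j. mlmc (\<lambda>z. Amat c\<gamma> \<phi> z i j) Tmax q zs);
         bq = (\<lambda>q zs i. mlmc (\<lambda>z. bvec c\<gamma> \<phi> g z i) Tmax q zs)
     in (opnorm (m + 1) (\<lambda>i j. mlmc_exp S Act P \<pi> s0 (\<lambda>q zs. Aq q zs i j) - Abar i j))\<^sup>2
           \<le> C * c\<gamma>\<^sup>2 * \<tau> / real Tmax
      \<and> (vnorm (m + 1) (\<lambda>i. mlmc_exp S Act P \<pi> s0 (\<lambda>q zs. bq q zs i) - bbar i))\<^sup>2
           \<le> C * c\<gamma>\<^sup>2 * \<tau> / real Tmax
      \<and> mlmc_exp S Act P \<pi> s0 (\<lambda>q zs. (opnorm (m + 1) (\<lambda>i j. Aq q zs i j - Abar i j))\<^sup>2)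
           \<le> C * c\<gamma>\<^sup>2 * \<tau> * ln (real Tmax)
      \<and> mlmc_exp S Act P \<pi> s0 (\<lambda>q zs. (vnorm (m + 1) (\<lambda>i. bq q zs i - bbar i))\<^sup>2)
           \<le> C * c\<gamma>\<^sup>2 * \<tau> * ln (real Tmax))"
  apply (rule exI[of _ 10000])
  apply (intro allI impI)
  apply (elim conjE)
  apply (rule main_bound)
                 apply assumption+
  done

end
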